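(* Assume $a^2\rho(\mathbf P_1\mathbf E)<1$. Then for every reception index $j\in\mathbb N_0$ and every $D\in\mathbb N$ the performance-evaluation function is finite and equals $$\mathcal J_{S_j}^D=\tilde g_D(\bar a^2,\gamma_{S_j})\,x_{S_j}^2+\bar M\big[\tilde g_D(a^2,\gamma_{S_j})-\tilde g_D(1,\gamma_{S_j})\big]-\Big[B\tilde f_D(1,\gamma_{S_j})+x_{S_j}^2\big(\tilde g_D(c^2,\gamma_{S_j})-\tilde f_D(c^2,\gamma_{S_j})\big)\Big],$$ where $$\tilde g_D(b,\gamma):=b^D\,\mathbf d^T(\mathbf I-b\mathbf P_1\mathbf E)^{-1}\mathbf P_0^{D-1}\mathbf P_1\boldsymbol\delta_\gamma,\qquad \tilde f_D(b,\gamma):=b^{\nu}\,\mathbf d^T(\mathbf P_1\mathbf E)^{\nu-D}(\mathbf I-b\mathbf P_1\mathbf E)^{-1}\mathbf P_0^{D-1}\mathbf P_1\boldsymbol\delta_\gamma,$$ and $\nu:=\max\{D,\lceil \log(x_{S_j}^2/B)/\log(1/c^2)\rceil\}$ (with $\nu:=D$ if $x_{S_j}=0$).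
   Context: Setup. Fix reals $a,L$ with $|a|>1$ and $\bar a:=a+L$ satisfying $0<\bar a^2<1$; fix $c$ with $\bar a^2<c^2<1$, $M>0$, $B>0$, and put $\bar M:=M/(a^2-1)$. Plant: $x_{k+1}=ax_k+u_k+v_k$, $k\in\mathbb N_0$, where $v_k$ are i.i.d. real random variables with mean $0$ and variance $M$, independent of everything else. At each time the sensor chooses $t_k\in\{0,1\}$; $r_k\in\{0,1\}$ is the reception indicator ($r_k=0$ whenever $t_k=0$). Controller: $u_k=L\hat x_k^+$, with $\hat x_k:=\bar a\hat x_{k-1}^+$, $\hat x_k^+:=x_k$ if $r_k=1$ and $\hat x_k^+:=\hat x_k$ if $r_k=0$; $z_k:=x_k-\hat x_k$, $z_k^+:=x_k-\hat x_k^+$. Channel: state $\gamma_k\in\{1,\dots,n\}$; given $\gamma_k=j$ and $t_k=\ell\in\{0,1\}$, $\gamma_{k+1}=i$ with probability $(\mathbf P_\ell)_{ij}$, where $\mathbf P_0,\mathbf P_1$ are column-stochastic. Drop probabilities $\mathbf e\in[0,1]^n$: if $t_k=1$ then $r_k=1$ with probability $1-e_{\gamma_k}$, else $r_k=0$. $\mathbf E:=\mathrm{diag}(\mathbf e)$, $\mathbf d:=\mathbf 1-\mathbf e$; $\rho(\cdot)$ spectral radius, $\boldsymbol\delta_i$ standard basis vector, $\mathbf P^0:=\mathbf I$. Convention $r_0=1$; $R_k:=\max\{i<k:r_i=1\}$, $R_k^+:=\max\{i\le k:r_i=1\}$; $S_0:=0$, $S_{j+1}:=\min\{k>S_j:r_k=1\}$.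 After a reception at time $k$ the sensor learns $\gamma_k$. Post-transmission information: $I_k^+:=\{k,x_k,z_k^+,R_k^+,x_{R_k^+},\mathbf p_k^+,t_k,r_k\gamma_k\}$ where $\mathbf p_k^+=\boldsymbol\delta_{\gamma_k}$ if $r_k=1$. Performance function $h_k:=x_k^2-\max\{c^{2(k-R_k)}x_{R_k}^2,B\}$. Nominal policy $\mathcal T_k^D$: $t_i=0$ for $i\in\{k,\dots,k+D-1\}$ and $t_i=1$ for $i\ge k+D$. Performance-evaluation function: $\mathcal J_{S_j}^D:=\mathbb E_{\mathcal T^{D-1}_{S_j+1}}[h_{S_{j+1}}\mid I_{S_j}^+]$ (transmission took place and succeeded at $S_j$; then the nominal policy $\mathcal T^{D-1}_{S_j+1}$ is used). Under this policy the probability that $S_{j+1}=S_j+w$ ($w\ge D$) given $\gamma_{S_j}=\gamma$ is $\tilde\Omega_D(w,\gamma)=\mathbf d^T(\mathbf P_1\mathbf E)^{w-D}\mathbf P_0^{D-1}\mathbf P_1\boldsymbol\delta_\gamma$. *)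

theory Defs
  imports "HOL-Analysis.Analysis" "HOL-Probability.Probability"
begin

fun mpow :: "real^'n^'n \<Rightarrow> nat \<Rightarrow> real^'n^'n" where
  "mpow A 0 = mat 1"
| "mpow A (Suc k) = A ** mpow A k"

definition cplx_mat :: "real^'n^'n \<Rightarrow> complex^'n^'n" where
  "cplx_mat A = (\<chi> i j. complex_of_real (A $ i $ j))"

definition spec_radius :: "real^'n^'n \<Rightarrow> real" where
  "spec_radius A = Max (norm ` {z. \<exists>w::complex^'n. w \<noteq> 0 \<and> cplx_mat A *v w = z *s w})"

definition col_stochastic :: "real^'n^'n \<Rightarrow> bool" where
  "col_stochastic P \<longleftrightarrow> (\<forall>i j. 0 \<le> P $ i $ j) \<and> (\<forall>j. (\<Sum>i\<in>UNIV. P $ i $ j) = 1)"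

definition diagm :: "real^'n \<Rightarrow> real^'n^'n" where
  "diagm e = (\<chi> i j. if i = j then e $ i else 0)"

definition dvec :: "real^'n \<Rightarrow> real^'n" where
  "dvec e = (\<chi> i. 1 - e $ i)"

definition gt :: "real^'n^'n \<Rightarrow> real^'n^'n \<Rightarrow> real^'n \<Rightarrow> nat \<Rightarrow> real \<Rightarrow> 'n \<Rightarrow> real" where
  "gt P0 P1 e D b g = b ^ D * (dvec e \<bullet>
      (matrix_inv (mat 1 - b *\<^sub>R (P1 ** diagm e)) *v (mpow P0 (D - 1) *v (P1 *v axis g 1))))"

definition nu :: "nat \<Rightarrow> real \<Rightarrow> real \<Rightarrow> real \<Rightarrow> nat" where
  "nu D B c x = (if x = 0 then D
                 else nat (max (int D) \<lceil>ln (x\<^sup>2 / B) / ln (1 / c\<^sup>2)\<rceil>))"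

definition ft :: "real^'n^'n \<Rightarrow> real^'n^'n \<Rightarrow> real^'n \<Rightarrow> nat \<Rightarrow> nat \<Rightarrow> real \<Rightarrow> 'n \<Rightarrow> real" where
  "ft P0 P1 e D \<nu> b g = b ^ \<nu> * (dvec e \<bullet>
      (mpow (P1 ** diagm e) (\<nu> - D) *v
        (matrix_inv (mat 1 - b *\<^sub>R (P1 ** diagm e)) *v (mpow P0 (D - 1) *v (P1 *v axis g 1)))))"

section \<open>One inter-reception cycle, time shifted so that S_j = 0\<close>

text \<open>Nominal policy T^{D-1}_{S_j+1} in shifted time: t_0 = 1 (the successful transmission
  at S_j), t_k = 0 for 1 \<le> k \<le> D-1, t_k = 1 for k \<ge> D.\<close>
definition tpol :: "nat \<Rightarrow> nat \<Rightarrow> bool" where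
  "tpol D k \<longleftrightarrow> k = 0 \<or> D \<le> k"

text \<open>Probability of a channel-path cylinder: gamma_0..gamma_m = gs 0..gs m and
  r_1..r_m = rs 1..rs m, given gamma_0 = g0.  Entry (P)_{ij} is P $ i $ j
  (i = next state, j = current state).\<close>
definition chan_prob :: "real^'n^'n \<Rightarrow> real^'n^'n \<Rightarrow> real^'n \<Rightarrow> nat \<Rightarrow> 'n
    \<Rightarrow> nat \<Rightarrow> (nat \<Rightarrow> 'n) \<Rightarrow> (nat \<Rightarrow> bool) \<Rightarrow> real" where
  "chan_prob P0 P1 e D g0 m gs rs =
     (if gs 0 = g0 then 1 else 0) *
     (\<Prod>k<m. (if tpol D k then P1 else P0) $ gs (Suc k) $ gs k *
        (if tpol D (Suc k)
         then (if rs (Suc k) then 1 - e $ gs (Suc k) else e $ gs (Suc k))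
         else (if rs (Suc k) then 0 else 1)))"

text \<open>Closed loop: returns (x_k, xhat^+_k); x_0 = xhat^+_0 = x0 (reception at time 0).
  x_{k+1} = a x_k + u_k + v_k with u_k = L xhat^+_k; xhat_{k+1} = (a+L) xhat^+_k;
  xhat^+_{k+1} = x_{k+1} if r_{k+1} else xhat_{k+1}.\<close>
fun traj :: "real \<Rightarrow> real \<Rightarrow> real \<Rightarrow> (nat \<Rightarrow> real) \<Rightarrow> (nat \<Rightarrow> bool) \<Rightarrow> nat \<Rightarrow> real \<times> real" where
  "traj a L x0 vs rs 0 = (x0, x0)"
| "traj a L x0 vs rs (Suc k) =
     (let x = fst (traj a L x0 vs rs k); xp = snd (traj a L x0 vs rs k);
          x' = a * x + L * xp + vs k
      in (x', if rs (Suc k) then x' else (a + L) * xp))"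

text \<open>R_k = max{i<k. r_i = 1}, with the convention that time 0 (= S_j) is a reception.\<close>
definition lastrec :: "(nat \<Rightarrow> bool) \<Rightarrow> nat \<Rightarrow> nat" where
  "lastrec rs k = Max {i. i < k \<and> (i = 0 \<or> rs i)}"

definition hperf :: "real \<Rightarrow> real \<Rightarrow> real \<Rightarrow> real \<Rightarrow> real \<Rightarrow> (nat \<Rightarrow> real) \<Rightarrow> (nat \<Rightarrow> bool)
    \<Rightarrow> nat \<Rightarrow> real" where
  "hperf a L c B x0 vs rs k =
     (fst (traj a L x0 vs rs k))\<^sup>2
     - max (c ^ (2 * (k - lastrec rs k)) * (fst (traj a L x0 vs rs (lastrec rs k)))\<^sup>2) B"

definition next_rec :: "(nat \<Rightarrow> bool) \<Rightarrow> nat" where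
  "next_rec rs = (LEAST k. 0 < k \<and> rs k)"

end

theory Submission
  imports Defs "Jordan_Normal_Form.Spectral_Radius"
begin


definition hh :: "nat \<Rightarrow> 'n::finite" where
  "hh = (SOME h. bij_betw h {..<CARD('n)} (UNIV::'n set))"

lemma hh_bij: "bij_betw (hh::nat\<Rightarrow>'n::finite) {..<CARD('n)} UNIV"
proof -
  obtain h :: "nat \<Rightarrow> 'n" where "bij_betw h {0..<card (UNIV::'n set)} UNIV"
    using ex_bij_betw_nat_finite[of "UNIV::'n set"] by auto
  hence "\<exists>h::nat\<Rightarrow>'n. bij_betw h {..<CARD('n)} UNIV" by (auto simp: atLeast0LessThan)
  thus ?thesis unfolding hh_def by (rule someI_ex)
qed

definition toM :: "real^'n^'n \<Rightarrow> complex mat" where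
  "toM X = Matrix.mat CARD('n::finite) CARD('n) (\<lambda>(i,j). complex_of_real (X $ hh i $ hh j))"

lemma toM_carrier: "toM (X::real^'n::finite^'n) \<in> carrier_mat CARD('n) CARD('n)"
  unfolding toM_def by auto

lemma sum_hh: "(\<Sum>k<CARD('n). f (hh k :: 'n::finite)) = (\<Sum>k\<in>UNIV. f k)"
  using sum.reindex_bij_betw[OF hh_bij, of f] by simp

lemma toM_mult: "toM ((X::real^'n::finite^'n) ** Y) = toM X * toM Y"
proof (rule eq_matI)
  fix i j assume i: "i < dim_row (toM X * toM Y)" and j: "j < dim_col (toM X * toM Y)"
  hence i': "i < CARD('n)" and j': "j < CARD('n)" by (auto simp: toM_def)
  have "(toM X * toM Y) $$ (i,j) = (\<Sum>k<CARD('n). complex_of_real (X $ hh i $ hh k * Y $ hh k $ hh j))"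
    using i' j' by (simp add: toM_def scalar_prod_def atLeast0LessThan)
  also have "\<dots> = complex_of_real (\<Sum>k<CARD('n). X $ hh i $ hh k * Y $ hh k $ hh j)" by simp
  also have "\<dots> = complex_of_real (\<Sum>k\<in>UNIV. X $ hh i $ k * Y $ k $ hh j)"
    by (subst sum_hh[of "\<lambda>k. X $ hh i $ k * Y $ k $ hh j"]) simp
  finally show "toM (X ** Y) $$ (i, j) = (toM X * toM Y) $$ (i, j)"
    using i' j' by (simp add: toM_def matrix_matrix_mult_def)
qed (auto simp: toM_def)

lemma toM_one: "toM (Finite_Cartesian_Product.mat 1 :: real^'n::finite^'n) = 1\<^sub>m CARD('n)"
proof (rule eq_matI)
  fix i j assume i: "i < dim_row (1\<^sub>m CARD('n))" and j: "j < dim_col (1\<^sub>m CARD('n))"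
  hence "i < CARD('n)" "j < CARD('n)" by auto
  moreover have "hh i = (hh j::'n) \<longleftrightarrow> i = j" using hh_bij[where 'n='n] calculation
    by (metis bij_betw_iff_bijections lessThan_iff)
  ultimately show "toM (Finite_Cartesian_Product.mat 1 :: real^'n::finite^'n) $$ (i, j) = 1\<^sub>m CARD('n) $$ (i, j)"
    by (simp add: toM_def Finite_Cartesian_Product.mat_def)
qed (auto simp: toM_def)

lemma mpow_Suc': "mpow X (Suc k) = mpow X k ** X"
  by (induction k) (auto simp: matrix_mul_assoc)

lemma toM_pow: "toM (mpow (X::real^'n::finite^'n) k) = toM X ^\<^sub>m k"
  proof (induction k)
  case 0 thus ?case using toM_carrier[of X] by (simp add: toM_one)
next
  case (Suc k) thus ?case by (simp only: mpow_Suc' toM_mult) simp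
qed

definition evset :: "real^'n::finite^'n \<Rightarrow> complex set" where
  "evset X = {z. \<exists>w::complex^'n. w \<noteq> 0 \<and> cplx_mat X *v w = z *s w}"

lemma hh_inv: "i < CARD('n::finite) \<Longrightarrow> inv_into {..<CARD('n)} (hh::nat\<Rightarrow>'n) (hh i) = i"
  using hh_bij[where 'n='n] by (simp add: bij_betw_def)

lemma hh_inv2: "inv_into {..<CARD('n::finite)} (hh::nat\<Rightarrow>'n) j < CARD('n) \<and> hh (inv_into {..<CARD('n::finite)} (hh::nat\<Rightarrow>'n) j) = j"
proof -
  have "j \<in> hh ` {..<CARD('n)}" using hh_bij[where 'n='n] by (simp add: bij_betw_def)
  from inv_into_into[OF this] f_inv_into_f[OF this] show ?thesis by auto
qed

lemma cplx_mult_vec: "(cplx_mat X *v w) $ hh i = (\<Sum>k<CARD('n). complex_of_real (X $ hh i $ hh k) * w $ hh k)"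
  for X :: "real^'n::finite^'n"
  by (subst sum_hh) (simp add: matrix_vector_mult_def cplx_mat_def)

lemma spectrum_toM: "spectrum (toM X) = evset (X::real^'n::finite^'n)"
proof (rule Set.set_eqI, rule iffI)
  fix z assume "z \<in> spectrum (toM X)"
  then obtain v where v: "v \<in> carrier_vec CARD('n)" "v \<noteq> 0\<^sub>v CARD('n)" "toM X *\<^sub>v v = z \<cdot>\<^sub>v v"
    unfolding spectrum_def eigenvalue_def eigenvector_def by (auto simp: toM_def)
  define w :: "complex^'n" where "w = (\<chi> j. v $ (inv_into {..<CARD('n)} hh j))"
  have wh: "w $ hh i = v $ i" if "i < CARD('n)" for i using that by (simp add: w_def hh_inv)
  from v(1,2) obtain i where i: "i < CARD('n)" "v $ i \<noteq> 0" by (auto simp: vec_eq_iff)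
  hence "w \<noteq> 0" using wh[OF i(1)] by (metis zero_index)
  moreover have "cplx_mat X *v w = z *s w"
  proof (subst Finite_Cartesian_Product.vec_eq_iff, rule allI)
    fix j :: 'n
    obtain i where i: "i < CARD('n)" "j = hh i" using hh_inv2[of j] by metis
    have "(cplx_mat X *v w) $ hh i = (toM X *\<^sub>v v) $ i"
      using i v(1) by (simp add: cplx_mult_vec wh toM_def scalar_prod_def atLeast0LessThan)
    also have "\<dots> = z * v $ i" using v(3) i v(1) by simp
    finally show "(cplx_mat X *v w) $ j = (z *s w) $ j" using i wh by simp
  qed
  ultimately show "z \<in> evset X" unfolding evset_def by blast
next
  fix z assume "z \<in> evset X"
  then obtain w :: "complex^'n" where w: "w \<noteq> 0" "cplx_mat X *v w = z *s w" unfolding evset_def by blast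
  define v where "v = vec CARD('n) (\<lambda>i. w $ hh i)"
  have "v \<noteq> 0\<^sub>v CARD('n)"
  proof
    assume "v = 0\<^sub>v CARD('n)"
    hence "w $ hh i = 0" if "i < CARD('n)" for i using that
      by (metis index_vec index_zero_vec(1) v_def)
    hence "w = 0" using hh_inv2 by (metis Finite_Cartesian_Product.vec_eq_iff zero_index)
    thus False using w by simp
  qed
  moreover have "toM X *\<^sub>v v = z \<cdot>\<^sub>v v"
  proof (rule eq_vecI)
    fix i assume "i < dim_vec (z \<cdot>\<^sub>v v)"
    hence i: "i < CARD('n)" by (simp add: v_def)
    have "(toM X *\<^sub>v v) $ i = (cplx_mat X *v w) $ hh i"
      using i by (simp add: cplx_mult_vec v_def toM_def scalar_prod_def atLeast0LessThan)
    also have "\<dots> = z * w $ hh i" using w(2) by simp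
    finally show "(toM X *\<^sub>v v) $ i = (z \<cdot>\<^sub>v v) $ i" using i by (simp add: v_def)
  qed (simp add: toM_def v_def)
  moreover have "v \<in> carrier_vec CARD('n)" by (simp add: v_def)
  ultimately show "z \<in> spectrum (toM X)"
    unfolding spectrum_def eigenvalue_def eigenvector_def using toM_carrier[of X] by auto
qed

lemma spec_radius_toM: "spec_radius X = spectral_radius (toM (X::real^'n::finite^'n))"
  unfolding spec_radius_def spectral_radius_def spectrum_toM evset_def ..

lemma evset_fin: "finite (evset (X::real^'n::finite^'n))" "evset X \<noteq> {}"
  using card_finite_spectrum(1)[OF toM_carrier[of X]] spectrum_non_empty[OF toM_carrier[of X]]
  by (auto simp: spectrum_toM)


lemma cm_scale: "cplx_mat (s *\<^sub>R X) *v w = complex_of_real s *s (cplx_mat X *v w)"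
  for X :: "real^'n::finite^'n"
  by (simp add: Finite_Cartesian_Product.vec_eq_iff matrix_vector_mult_def cplx_mat_def sum_distrib_left mult.assoc)

lemma evset_scale: assumes s: "s > 0"
  shows "evset (s *\<^sub>R X) = (\<lambda>z. complex_of_real s * z) ` evset (X::real^'n::finite^'n)"
proof (rule Set.set_eqI, rule iffI)
  fix z assume "z \<in> evset (s *\<^sub>R X)"
  then obtain w :: "complex^'n" where w: "w \<noteq> 0" "complex_of_real s *s (cplx_mat X *v w) = z *s w"
    unfolding evset_def cm_scale by blast
  hence "cplx_mat X *v w = (z / complex_of_real s) *s w" using s
    by (simp add: Finite_Cartesian_Product.vec_eq_iff field_simps)
  hence "z / complex_of_real s \<in> evset X" using w unfolding evset_def by blast
  moreover have "z = complex_of_real s * (z / complex_of_real s)" using s by simp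
  ultimately show "z \<in> (\<lambda>z. complex_of_real s * z) ` evset X" by blast
next
  fix z assume "z \<in> (\<lambda>z. complex_of_real s * z) ` evset X"
  then obtain y w where "z = complex_of_real s * y" "w \<noteq> 0" "cplx_mat X *v w = y *s w"
    unfolding evset_def by blast
  thus "z \<in> evset (s *\<^sub>R X)" unfolding evset_def cm_scale
    by (auto simp: Finite_Cartesian_Product.vec_eq_iff)
qed

lemma spec_radius_nonneg: "0 \<le> spec_radius (X::real^'n::finite^'n)"
proof -
  obtain z where "z \<in> evset X" using evset_fin(2) by blast
  hence "norm z \<le> spec_radius X" unfolding spec_radius_def evset_def[symmetric]
    using evset_fin(1) by (intro Max_ge) auto
  thus ?thesis by (meson norm_ge_zero order_trans)
qed

lemma spec_radius_scale: assumes s: "s > 0"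
  shows "spec_radius (s *\<^sub>R X) = s * spec_radius (X::real^'n::finite^'n)"
proof -
  have "norm ` evset (s *\<^sub>R X) = (\<lambda>x. s * x) ` (norm ` evset X)"
    unfolding evset_scale[OF s] image_image using s by (simp add: norm_mult)
  moreover have "Max ((\<lambda>x. s * x) ` (norm ` evset X)) = s * Max (norm ` evset X)"
    by (rule mono_Max_commute[symmetric]) (use s evset_fin in \<open>auto simp: mono_def\<close>)
  ultimately show ?thesis unfolding spec_radius_def evset_def[symmetric] by simp
qed

lemma mpow_scale: "mpow (s *\<^sub>R X) k = s ^ k *\<^sub>R mpow (X::real^'n::finite^'n) k"
proof (induction k)
  case 0 thus ?case by simp
next
  case (Suc k)
  thus ?case by (simp add: Finite_Cartesian_Product.vec_eq_iff matrix_matrix_mult_def sum_distrib_left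
        mult_ac)
qed

lemma power_bound:
  fixes A :: "real^'n::finite^'n"
  assumes rho: "a2 * spec_radius A < 1" and a2: "a2 > 0"
  shows "\<exists>s C. s > a2 \<and> (\<forall>k (i::'n) (j::'n). \<bar>mpow A k $ i $ j\<bar> * s ^ k \<le> C)"
proof -
  define \<rho> where "\<rho> = spec_radius A"
  have r0: "\<rho> \<ge> 0" unfolding \<rho>_def by (rule spec_radius_nonneg)
  define s where "s = 2 * a2 / (1 + a2 * \<rho>)"
  have pos: "1 + a2 * \<rho> > 0" using r0 a2 by (simp add: add_pos_nonneg)
  have sa: "s > a2" unfolding s_def using rho pos a2 by (simp add: field_simps \<rho>_def)
  have sp: "s > 0" using sa a2 by simp
  have "s * \<rho> < 1" unfolding s_def using rho pos a2 by (simp add: field_simps \<rho>_def)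
  hence "spectral_radius (toM (s *\<^sub>R A)) < 1"
    unfolding spec_radius_toM[symmetric] spec_radius_scale[OF sp] \<rho>_def .
  from spectral_radius_jnf_norm_bound_less_1_upper_triangular[OF toM_carrier this]
  obtain C where C: "\<And>k. norm_bound (toM (s *\<^sub>R A) ^\<^sub>m k) C" by blast
  have "\<bar>mpow A k $ i $ j\<bar> * s ^ k \<le> C" for k and i j :: 'n
  proof -
    obtain i' where i': "i' < CARD('n)" "hh i' = i" using hh_inv2[of i] by blast
    obtain j' where j': "j' < CARD('n)" "hh j' = j" using hh_inv2[of j] by blast
    have "norm ((toM (s *\<^sub>R A) ^\<^sub>m k) $$ (i', j')) \<le> C"
      using C[of k] i' j' toM_carrier[of "s *\<^sub>R A"] unfolding norm_bound_def by auto
    also have "(toM (s *\<^sub>R A) ^\<^sub>m k) $$ (i', j') = complex_of_real (s ^ k * mpow A k $ i $ j)"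
      unfolding toM_pow[symmetric] mpow_scale using i' j' by (simp add: toM_def)
    finally have "norm (complex_of_real (s ^ k * mpow A k $ i $ j)) \<le> C" .
    hence "\<bar>s ^ k * mpow A k $ i $ j\<bar> \<le> C" by (simp only: norm_of_real)
    thus ?thesis using sp by (simp add: abs_mult mult.commute)
  qed
  thus ?thesis using sa by blast
qed


no_notation Matrix.vec_index (infixl "$" 100)
no_notation Matrix.scalar_prod (infix "\<bullet>" 70)




lemma matrix_inv_props: assumes "invertible (X::real^'n::finite^'n)"
  shows "X ** matrix_inv X = Finite_Cartesian_Product.mat 1" "matrix_inv X ** X = Finite_Cartesian_Product.mat 1"
proof -
  have "\<exists>A'. X ** A' = Finite_Cartesian_Product.mat 1 \<and> A' ** X = Finite_Cartesian_Product.mat 1"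
    using assms unfolding invertible_def by blast
  from someI_ex[OF this] show "X ** matrix_inv X = Finite_Cartesian_Product.mat 1" "matrix_inv X ** X = Finite_Cartesian_Product.mat 1"
    unfolding matrix_inv_def by auto
qed

lemma mpow_vec_Suc': "mpow X (Suc k) *v z = mpow X k *v (X *v z)"
  by (simp only: mpow_Suc' matrix_vector_mul_assoc)

lemma mpow_add: "mpow X (k + m) = mpow X k ** mpow X m"
  by (induction k) (simp_all add: matrix_mul_assoc)

lemma sums_shift0: assumes "(\<lambda>k. f (k + n)) sums S" "\<And>i. i < n \<Longrightarrow> f i = (0::real)"
  shows "f sums S"
  using assms(1) unfolding sums_iff_shift using assms(2) by simp

locale pbound =
  fixes A :: "real^'n::finite^'n" and s C :: real
  assumes bnd: "\<And>k i j. \<bar>mpow A k $ i $ j\<bar> * s ^ k \<le> C" and s_pos: "s > 0"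
begin

lemma entry_lim: assumes b: "0 \<le> b" "b < s"
  shows "(\<lambda>k. mpow (b *\<^sub>R A) k $ i $ j) \<longlonglongrightarrow> 0"
proof (rule Lim_null_comparison)
  show "\<forall>\<^sub>F k in sequentially. norm (mpow (b *\<^sub>R A) k $ i $ j) \<le> C * (b / s) ^ k"
  proof (rule always_eventually, rule allI)
    fix k
    have "\<bar>mpow A k $ i $ j\<bar> * s ^ k \<le> C" by (rule bnd)
    hence "\<bar>mpow A k $ i $ j\<bar> \<le> C / s ^ k" using s_pos by (simp add: field_simps)
    hence "b ^ k * \<bar>mpow A k $ i $ j\<bar> \<le> b ^ k * (C / s ^ k)" using b by (intro mult_left_mono) auto
    thus "norm (mpow (b *\<^sub>R A) k $ i $ j) \<le> C * (b / s) ^ k"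
      using b by (simp add: mpow_scale abs_mult power_divide mult.commute)
  qed
  show "(\<lambda>k. C * (b / s) ^ k) \<longlonglongrightarrow> 0"
    using b s_pos by (intro tendsto_mult_right_zero LIMSEQ_power_zero) simp
qed

lemma vec_lim: assumes b: "0 \<le> b" "b < s"
  shows "(\<lambda>k. (mpow (b *\<^sub>R A) k *v z) $ i) \<longlonglongrightarrow> 0"
  unfolding matrix_vector_mult_def vec_lambda_beta
  by (intro tendsto_null_sum tendsto_mult_left_zero entry_lim[OF b])

lemma inner_lim: assumes b: "0 \<le> b" "b < s"
  shows "(\<lambda>k. d \<bullet> (mpow (b *\<^sub>R A) k *v z)) \<longlonglongrightarrow> 0"
  unfolding inner_vec_def
  by (intro tendsto_null_sum) (simp add: tendsto_mult_right_zero vec_lim[OF b])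

lemma invertible_IA: assumes b: "0 \<le> b" "b < s"
  shows "invertible (Finite_Cartesian_Product.mat 1 - b *\<^sub>R A)"
proof -
  have "x = 0" if x: "(Finite_Cartesian_Product.mat 1 - b *\<^sub>R A) *v x = 0" for x
  proof -
    have fx: "(b *\<^sub>R A) *v x = x" using x by (simp add: matrix_vector_mult_diff_rdistrib)
    have pk: "mpow (b *\<^sub>R A) k *v x = x" for k
      by (induction k) (simp_all add: mpow_vec_Suc' fx del: mpow.simps(2))
    show "x = 0"
    proof (subst Finite_Cartesian_Product.vec_eq_iff, rule allI)
      fix i
      have "(\<lambda>k. (mpow (b *\<^sub>R A) k *v x) $ i) \<longlonglongrightarrow> 0" by (rule vec_lim[OF b])
      hence "(\<lambda>k. x $ i) \<longlonglongrightarrow> 0" unfolding pk .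
      thus "x $ i = 0 $ i" using LIMSEQ_const_iff by auto
    qed
  qed
  thus ?thesis unfolding invertible_left_inverse matrix_left_invertible_ker by blast
qed

lemma series: assumes b: "0 \<le> b" "b < s"
  shows "(\<lambda>k. b ^ k * (d \<bullet> (mpow A k *v y))) sums
           (d \<bullet> (matrix_inv (Finite_Cartesian_Product.mat 1 - b *\<^sub>R A) *v y))"
proof -
  define X where "X = Finite_Cartesian_Product.mat 1 - b *\<^sub>R A"
  define B where "B = b *\<^sub>R A"
  define z where "z = matrix_inv X *v y"
  have inv: "invertible X" unfolding X_def by (rule invertible_IA[OF b])
  have Xz: "X *v z = y" unfolding z_def matrix_vector_mul_assoc matrix_inv_props(1)[OF inv] by simp
  have Xz2: "z - B *v z = y" using Xz unfolding X_def B_def by (simp add: matrix_vector_mult_diff_rdistrib)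
  have tel: "(\<Sum>k<N. mpow B k *v y) = z - mpow B N *v z" for N
  proof -
    have "(\<Sum>k<N. mpow B k *v y) = (\<Sum>k<N. mpow B k *v z - mpow B (Suc k) *v z)"
      unfolding Xz2[symmetric] by (simp add: matrix_vector_mult_diff_distrib mpow_vec_Suc' del: mpow.simps(2))
    also have "\<dots> = z - mpow B N *v z" by (subst sum_lessThan_telescope') simp
    finally show ?thesis .
  qed
  have ps: "(\<Sum>k<N. b ^ k * (d \<bullet> (mpow A k *v y))) = d \<bullet> z - d \<bullet> (mpow B N *v z)" for N
  proof -
    have "(\<Sum>k<N. b ^ k * (d \<bullet> (mpow A k *v y))) = d \<bullet> (\<Sum>k<N. mpow B k *v y)"
      unfolding inner_sum_right B_def mpow_scale
      by (simp add: scaleR_matrix_vector_assoc[symmetric] inner_scaleR_right)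
    thus ?thesis unfolding tel by (simp add: inner_diff_right)
  qed
  have "(\<lambda>N. d \<bullet> z - d \<bullet> (mpow B N *v z)) \<longlonglongrightarrow> d \<bullet> z - 0"
    unfolding B_def by (intro tendsto_diff tendsto_const inner_lim[OF b])
  thus ?thesis unfolding sums_def ps z_def X_def by simp
qed


lemma inv_commute: assumes b: "0 \<le> b" "b < s"
  shows "matrix_inv (Finite_Cartesian_Product.mat 1 - b *\<^sub>R A) *v (mpow A m *v u) =
         mpow A m *v (matrix_inv (Finite_Cartesian_Product.mat 1 - b *\<^sub>R A) *v u)"
proof -
  define X where "X = Finite_Cartesian_Product.mat 1 - b *\<^sub>R A"
  have inv: "invertible X" unfolding X_def by (rule invertible_IA[OF b])
  define w where "w = matrix_inv X *v u"
  have Xw: "X *v w = u" unfolding w_def matrix_vector_mul_assoc matrix_inv_props(1)[OF inv] by simp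
  have comm: "mpow A m ** A = A ** mpow A m" using mpow_Suc'[of A m] by simp
  have e1: "X *v v = v - b *\<^sub>R (A *v v)" for v
    by (simp add: X_def matrix_vector_mult_diff_rdistrib scaleR_matrix_vector_assoc)
  have "mpow A m *v u = X *v (mpow A m *v w)"
    unfolding Xw[symmetric] e1
    by (simp add: matrix_vector_mult_diff_distrib matrix_vector_mult_scaleR matrix_vector_mul_assoc comm)
  hence "matrix_inv X *v (mpow A m *v u) = matrix_inv X *v (X *v (mpow A m *v w))" by (simp only:)
  also have "\<dots> = mpow A m *v w"
    by (simp only: matrix_vector_mul_assoc matrix_mul_assoc matrix_inv_props(2)[OF inv] matrix_mul_lid)
  finally have "matrix_inv X *v (mpow A m *v u) = mpow A m *v w" .
  thus ?thesis unfolding X_def w_def .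
qed

end

context
  fixes P0 P1 :: "real^'n::finite^'n" and e :: "real^'n" and D :: nat and g :: 'n
begin

definition Om :: "nat \<Rightarrow> real" where
  "Om w = (if D \<le> w then dvec e \<bullet> (mpow (P1 ** diagm e) (w - D) *v (mpow P0 (D - 1) *v (P1 *v axis g 1))) else 0)"

lemma gt_sums: assumes "pbound (P1 ** diagm e) s C" "0 \<le> b" "b < s"
  shows "(\<lambda>w. Om w * b ^ w) sums gt P0 P1 e D b g"
proof (rule sums_shift0[where n = D])
  interpret pbound "P1 ** diagm e" s C by fact
  from sums_mult[OF series[OF assms(2,3)], of "b ^ D"]
  show "(\<lambda>k. Om (k + D) * b ^ (k + D)) sums gt P0 P1 e D b g"
    unfolding gt_def Om_def by (simp add: power_add mult_ac)
qed (simp add: Om_def)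

lemma ft_sums: assumes "pbound (P1 ** diagm e) s C" "0 \<le> b" "b < s" "D \<le> \<nu>"
  shows "(\<lambda>w. if \<nu> \<le> w then Om w * b ^ w else 0) sums ft P0 P1 e D \<nu> b g"
proof (rule sums_shift0[where n = \<nu>])
  interpret pbound "P1 ** diagm e" s C by fact
  from sums_mult[OF series[OF assms(2,3), of _ "mpow (P1 ** diagm e) (\<nu> - D) *v (mpow P0 (D - 1) *v (P1 *v axis g 1))"], of "b ^ \<nu>"]
  have "(\<lambda>k. b ^ \<nu> * (b ^ k * (dvec e \<bullet> (mpow (P1 ** diagm e) k *v (mpow (P1 ** diagm e) (\<nu> - D) *v (mpow P0 (D - 1) *v (P1 *v axis g 1)))))))
     sums ft P0 P1 e D \<nu> b g"
    unfolding ft_def inv_commute[OF assms(2,3)] .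
  moreover have "(if \<nu> \<le> k + \<nu> then Om (k + \<nu>) * b ^ (k + \<nu>) else 0) =
     b ^ \<nu> * (b ^ k * (dvec e \<bullet> (mpow (P1 ** diagm e) k *v (mpow (P1 ** diagm e) (\<nu> - D) *v (mpow P0 (D - 1) *v (P1 *v axis g 1))))))" for k
  proof -
    have kk: "k + \<nu> - D = k + (\<nu> - D)" using assms(4) by simp
    show ?thesis unfolding Om_def kk mpow_add using assms(4)
      by (simp add: power_add mult_ac matrix_vector_mul_assoc matrix_mul_assoc)
  qed
  ultimately show "(\<lambda>k. if \<nu> \<le> k + \<nu> then Om (k + \<nu>) * b ^ (k + \<nu>) else 0) sums ft P0 P1 e D \<nu> b g"
    by simp
qed simp

end




lemma sum_PiE_insert:
  assumes "a \<notin> S"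
  shows "(\<Sum>g\<in>Pi\<^sub>E (insert a S) T. f g) = (\<Sum>y\<in>T a. \<Sum>g\<in>Pi\<^sub>E S T. f (g(a := y)))"
proof -
  have "(\<Sum>g\<in>Pi\<^sub>E (insert a S) T. f g) = (\<Sum>p\<in>T a \<times> Pi\<^sub>E S T. f ((\<lambda>(y, g). g(a := y)) p))"
    unfolding PiE_insert_eq by (rule sum.reindex[OF inj_combinator[OF assms], unfolded comp_def])
  also have "\<dots> = (\<Sum>y\<in>T a. \<Sum>g\<in>Pi\<^sub>E S T. f (g(a := y)))"
    by (subst sum.cartesian_product) (simp add: split_def)
  finally show ?thesis .
qed

lemma sum_if_const: "(\<Sum>x\<in>A. if P then f x else 0) = (if P then sum f A else 0)"
  by auto

definition fac :: "nat \<Rightarrow> real^'n \<Rightarrow> (nat \<Rightarrow> bool) \<Rightarrow> nat \<Rightarrow> 'n \<Rightarrow> real" where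
  "fac D e rs k i = (if tpol D k then (if rs k then 1 - e $ i else e $ i) else (if rs k then 0 else 1))"

fun Wv :: "real^'n::finite^'n \<Rightarrow> real^'n^'n \<Rightarrow> real^'n \<Rightarrow> nat \<Rightarrow> 'n \<Rightarrow> (nat \<Rightarrow> bool) \<Rightarrow> nat \<Rightarrow> real^'n" where
  "Wv P0 P1 e D g0 rs 0 = axis g0 1"
| "Wv P0 P1 e D g0 rs (Suc m) =
    (\<chi> i. fac D e rs (Suc m) i * ((if tpol D m then P1 else P0) *v Wv P0 P1 e D g0 rs m) $ i)"

lemma cp_alt: "chan_prob P0 P1 e D g0 m gs rs = (if gs 0 = g0 then 1 else 0) *
     (\<Prod>k<m. (if tpol D k then P1 else P0) $ gs (Suc k) $ gs k * fac D e rs (Suc k) (gs (Suc k)))"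
  unfolding chan_prob_def fac_def by (rule arg_cong2[where f="(*)"]) (auto intro!: prod.cong)

lemma cp_Suc: "chan_prob P0 P1 e D g0 (Suc m) gs rs = chan_prob P0 P1 e D g0 m gs rs *
     ((if tpol D m then P1 else P0) $ gs (Suc m) $ gs m * fac D e rs (Suc m) (gs (Suc m)))"
  unfolding cp_alt by simp

lemma cp_upd: "m < k \<Longrightarrow> chan_prob P0 P1 e D g0 m (gs(k := y)) rs = chan_prob P0 P1 e D g0 m gs rs"
  unfolding cp_alt by (auto intro!: prod.cong arg_cong2[where f="(*)"])

lemma Wv_sum:
  "(\<Sum>gs\<in>Pi\<^sub>E {..m} (\<lambda>_. UNIV). chan_prob P0 P1 e D g0 m gs rs * (if gs m = i then 1 else 0))
     = Wv P0 P1 e D g0 rs m $ i"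
proof (induction m arbitrary: i)
  case 0
  have "{..0::nat} = insert 0 {}" by auto
  hence "(\<Sum>gs\<in>Pi\<^sub>E {..0::nat} (\<lambda>_. UNIV). F gs) = (\<Sum>y\<in>UNIV. F ((\<lambda>x. undefined)(0 := y)))" for F :: "(nat \<Rightarrow> 'a) \<Rightarrow> real"
    by (simp add: sum_PiE_insert fun_upd_def)
  thus ?case by (simp add: cp_alt axis_def mult_if_delta)
next
  case (Suc m)
  let ?T = "(\<lambda>_::nat. UNIV :: 'a set)"
  let ?Pt = "if tpol D m then P1 else P0"
  let ?cp = "chan_prob P0 P1 e D g0"
  have ins: "{..Suc m} = insert (Suc m) {..m}" by auto
  have "(\<Sum>gs\<in>Pi\<^sub>E {..Suc m} ?T. ?cp (Suc m) gs rs * (if gs (Suc m) = i then 1 else 0))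
      = (\<Sum>y\<in>UNIV. \<Sum>g\<in>Pi\<^sub>E {..m} ?T. ?cp (Suc m) (g(Suc m := y)) rs * (if y = i then 1 else 0))"
    unfolding ins by (subst sum_PiE_insert) auto
  also have "\<dots> = (\<Sum>g\<in>Pi\<^sub>E {..m} ?T. ?cp (Suc m) (g(Suc m := i)) rs)"
    by (simp add: if_distrib sum_if_const cong: if_cong)
  also have "\<dots> = (\<Sum>g\<in>Pi\<^sub>E {..m} ?T. ?cp m g rs * (?Pt $ i $ g m * fac D e rs (Suc m) i))"
    by (rule sum.cong[OF refl]) (simp add: cp_Suc cp_upd)
  also have "\<dots> = fac D e rs (Suc m) i * (\<Sum>g\<in>Pi\<^sub>E {..m} ?T. ?cp m g rs * ?Pt $ i $ g m)"
    by (simp add: sum_distrib_left mult_ac)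
  also have "(\<Sum>g\<in>Pi\<^sub>E {..m} ?T. ?cp m g rs * ?Pt $ i $ g m)
      = (\<Sum>g\<in>Pi\<^sub>E {..m} ?T. \<Sum>j\<in>UNIV. ?Pt $ i $ j * (?cp m g rs * (if g m = j then 1 else 0)))"
    by (rule sum.cong[OF refl]) (simp add: if_distrib cong: if_cong)
  also have "\<dots> = (\<Sum>j\<in>UNIV. ?Pt $ i $ j * Wv P0 P1 e D g0 rs m $ j)"
    by (subst sum.swap) (simp add: sum_distrib_left[symmetric] Suc.IH)
  finally show ?case by (simp add: matrix_vector_mult_def)
qed


lemma diagm_mult: "diagm e *v v = (\<chi> i. e $ i * v $ i)"
proof -
  have "(\<Sum>j\<in>UNIV. (if i = j then e $ i else 0) * v $ j) = e $ i * v $ i" for i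
  proof -
    have "(\<Sum>j\<in>UNIV. (if i = j then e $ i else 0) * v $ j) = (\<Sum>j\<in>UNIV. if i = j then e $ i * v $ j else 0)"
      by (rule sum.cong) auto
    thus ?thesis by simp
  qed
  thus ?thesis unfolding diagm_def matrix_vector_mult_def by simp
qed

context
  fixes P0 P1 :: "real^'n::finite^'n" and e :: "real^'n" and D :: nat and g0 :: 'n and w :: nat
  assumes D: "0 < D" and w: "0 < w"
begin

abbreviation "rsw \<equiv> (\<lambda>k::nat. k = w)"
abbreviation "uu \<equiv> mpow P0 (D - 1) *v (P1 *v axis g0 1)"
abbreviation "AA \<equiv> P1 ** diagm e"

lemma C1: "0 < m \<Longrightarrow> m < D \<Longrightarrow> m \<le> w \<Longrightarrow>
   Wv P0 P1 e D g0 rsw m = (if m = w then 0 else mpow P0 (m - 1) *v (P1 *v axis g0 1))"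
proof (induction m)
  case 0 thus ?case by simp
next
  case (Suc m)
  show ?case
  proof (cases m)
    case 0
    thus ?thesis using Suc.prems by (auto simp: fac_def tpol_def Finite_Cartesian_Product.vec_eq_iff)
  next
    case (Suc m')
    have IH: "Wv P0 P1 e D g0 rsw m = mpow P0 (m - 1) *v (P1 *v axis g0 1)"
      using Suc.IH Suc.prems \<open>m = Suc m'\<close> by auto
    have "\<not> tpol D m" "tpol D (Suc m) \<longleftrightarrow> False" using Suc.prems \<open>m = Suc m'\<close> by (auto simp: tpol_def)
    thus ?thesis using IH \<open>m = Suc m'\<close>
      by (auto simp: fac_def Finite_Cartesian_Product.vec_eq_iff matrix_vector_mul_assoc matrix_mul_assoc)
  qed
qed

lemma C2: "D \<le> m \<Longrightarrow> m \<le> w \<Longrightarrow>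
   Wv P0 P1 e D g0 rsw m = (\<chi> i. (if m = w then 1 - e $ i else e $ i) * (mpow AA (m - D) *v uu) $ i)"
proof (induction m rule: dec_induct)
  case base
  obtain D' where D': "D = Suc D'" using D by (cases D) auto
  have "Wv P0 P1 e D g0 rsw D' = (if D' = 0 then axis g0 1 else mpow P0 (D' - 1) *v (P1 *v axis g0 1))"
  proof (cases D')
    case (Suc k) thus ?thesis using C1[of D'] D' base by auto
  qed simp
  moreover have "tpol D D" "tpol D D' \<longleftrightarrow> D' = 0" using D' by (auto simp: tpol_def)
  ultimately show ?case using D'
    by (cases D') (auto simp: fac_def Finite_Cartesian_Product.vec_eq_iff matrix_vector_mul_assoc matrix_mul_assoc)
next
  case (step m)
  have IH: "Wv P0 P1 e D g0 rsw m = diagm e *v (mpow AA (m - D) *v uu)"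
    using step by (auto simp: diagm_mult)
  have t: "tpol D m" "tpol D (Suc m)" using step by (auto simp: tpol_def)
  have "P1 *v Wv P0 P1 e D g0 rsw m = mpow AA (Suc m - D) *v uu"
    unfolding IH using step(1) by (simp add: matrix_vector_mul_assoc Suc_diff_le matrix_mul_assoc)
  thus ?case using t by (simp add: fac_def Finite_Cartesian_Product.vec_eq_iff)
qed

lemma path_sum: "(\<Sum>gs\<in>Pi\<^sub>E {..w} (\<lambda>_. UNIV). chan_prob P0 P1 e D g0 w gs rsw) = Om P0 P1 e D g0 w"
proof -
  have "(\<Sum>gs\<in>Pi\<^sub>E {..w} (\<lambda>_. UNIV). chan_prob P0 P1 e D g0 w gs rsw)
      = (\<Sum>gs\<in>Pi\<^sub>E {..w} (\<lambda>_. UNIV). \<Sum>i\<in>UNIV. chan_prob P0 P1 e D g0 w gs rsw * (if gs w = i then 1 else 0))"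
    by (simp add: if_distrib cong: if_cong)
  also have "\<dots> = (\<Sum>i\<in>UNIV. Wv P0 P1 e D g0 rsw w $ i)"
    by (subst sum.swap) (simp add: Wv_sum)
  also have "\<dots> = Om P0 P1 e D g0 w"
  proof (cases "D \<le> w")
    case True thus ?thesis using C2[of w] by (simp add: Om_def inner_vec_def dvec_def)
  next
    case False thus ?thesis using C1[of w] w by (simp add: Om_def)
  qed
  finally show ?thesis .
qed

end


lemma one_stoch: assumes "col_stochastic P"
  shows "(\<chi> i. (1::real)) \<bullet> (P *v y) = (\<chi> i. (1::real)) \<bullet> (y::real^'n::finite)"
proof -
  have "(\<chi> i. (1::real)) \<bullet> (P *v y) = (\<Sum>i\<in>UNIV. \<Sum>j\<in>UNIV. P $ i $ j * y $ j)"
    by (simp add: inner_vec_def matrix_vector_mult_def)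
  also have "\<dots> = (\<Sum>j\<in>UNIV. (\<Sum>i\<in>UNIV. P $ i $ j) * y $ j)"
    by (subst sum.swap) (simp add: sum_distrib_right)
  also have "\<dots> = (\<chi> i. (1::real)) \<bullet> y"
    using assms by (simp add: col_stochastic_def inner_vec_def)
  finally show ?thesis .
qed

lemma one_stoch_pow: assumes "col_stochastic P"
  shows "(\<chi> i. (1::real)) \<bullet> (mpow P k *v y) = (\<chi> i. (1::real)) \<bullet> (y::real^'n::finite)"
  by (induction k) (simp_all add: one_stoch[OF assms] matrix_vector_mul_assoc[symmetric])

lemma one_IA: assumes "col_stochastic P1"
  shows "(\<chi> i. (1::real)) \<bullet> ((Finite_Cartesian_Product.mat 1 - P1 ** diagm e) *v z) = dvec e \<bullet> (z::real^'n::finite)"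
proof -
  have "(\<chi> i. (1::real)) \<bullet> ((P1 ** diagm e) *v z) = (\<chi> i. (1::real)) \<bullet> (diagm e *v z)"
    by (simp add: matrix_vector_mul_assoc[symmetric] one_stoch[OF assms])
  thus ?thesis
    by (simp add: matrix_vector_mult_diff_rdistrib inner_diff_right diagm_mult inner_vec_def dvec_def
        sum_subtractf left_diff_distrib)
qed

lemma gt_one: assumes "col_stochastic P0" "col_stochastic P1"
    "invertible (Finite_Cartesian_Product.mat 1 - 1 *\<^sub>R (P1 ** diagm e))"
  shows "gt P0 P1 e D 1 g = 1"
proof -
  define X where "X = Finite_Cartesian_Product.mat 1 - 1 *\<^sub>R (P1 ** diagm e)"
  define u where "u = mpow P0 (D - 1) *v (P1 *v axis g 1)"
  have "X *v (matrix_inv X *v u) = u"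
    by (simp add: matrix_vector_mul_assoc matrix_inv_props(1)[OF assms(3)[folded X_def]])
  hence "dvec e \<bullet> (matrix_inv X *v u) = (\<chi> i. (1::real)) \<bullet> u"
    using one_IA[OF assms(2), of e "matrix_inv X *v u"] unfolding X_def by simp
  also have "\<dots> = 1" unfolding u_def one_stoch_pow[OF assms(1)] one_stoch[OF assms(2)]
    by (simp add: inner_vec_def axis_def)
  finally show ?thesis unfolding gt_def X_def u_def by simp
qed




lemma traj_norec:
  assumes "\<And>j. 0 < j \<Longrightarrow> j < w \<Longrightarrow> \<not> rs j" "k \<le> w"
  shows "fst (traj a L x0 vs rs k) = (a + L) ^ k * x0 + (\<Sum>i<k. a ^ (k - 1 - i) * vs i)
     \<and> (k < w \<longrightarrow> snd (traj a L x0 vs rs k) = (a + L) ^ k * x0)"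
  using assms(2)
proof (induction k)
  case 0 thus ?case by simp
next
  case (Suc k)
  hence IH: "fst (traj a L x0 vs rs k) = (a + L) ^ k * x0 + (\<Sum>i<k. a ^ (k - 1 - i) * vs i)"
    "snd (traj a L x0 vs rs k) = (a + L) ^ k * x0" by auto
  have nr: "Suc k < w \<Longrightarrow> \<not> rs (Suc k)" using assms(1) by simp
  have "a * (\<Sum>i<k. a ^ (k - 1 - i) * vs i) = (\<Sum>i<k. a ^ (Suc k - 1 - i) * vs i)"
    unfolding sum_distrib_left by (rule sum.cong) (auto simp: power_Suc[symmetric] Suc_diff_Suc mult.assoc)
  hence "fst (traj a L x0 vs rs (Suc k)) = (a + L) ^ Suc k * x0 + (\<Sum>i<Suc k. a ^ (Suc k - 1 - i) * vs i)"
    by (simp add: Let_def IH algebra_simps)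
  moreover have "Suc k < w \<longrightarrow> snd (traj a L x0 vs rs (Suc k)) = (a + L) ^ Suc k * x0"
    using nr by (simp add: Let_def IH)
  ultimately show ?case by blast
qed

lemma next_rec_eq: assumes "0 < w" "rs w" "\<And>j. 0 < j \<Longrightarrow> j < w \<Longrightarrow> \<not> rs j"
  shows "next_rec rs = w"
  unfolding next_rec_def using assms by (intro Least_equality) (auto simp: not_less[symmetric])

lemma lastrec_eq: assumes "0 < w" "\<And>j. 0 < j \<Longrightarrow> j < w \<Longrightarrow> \<not> rs j"
  shows "lastrec rs w = 0"
proof -
  have "{i. i < w \<and> (i = 0 \<or> rs i)} = {0}" using assms by auto
  thus ?thesis unfolding lastrec_def by simp
qed

definition Hw :: "real \<Rightarrow> real \<Rightarrow> real \<Rightarrow> real \<Rightarrow> real \<Rightarrow> nat \<Rightarrow> (nat \<Rightarrow> real) \<Rightarrow> real" where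
  "Hw a L c B x0 w s = ((a + L) ^ w * x0 + (\<Sum>i<w. a ^ (w - 1 - i) * s i))\<^sup>2 - max (c ^ (2 * w) * x0\<^sup>2) B"

lemma hperf_eq: assumes "0 < w" "rs w" "\<And>j. 0 < j \<Longrightarrow> j < w \<Longrightarrow> \<not> rs j"
  shows "hperf a L c B x0 vs rs (next_rec rs) = Hw a L c B x0 w vs"
proof -
  have n: "next_rec rs = w" using next_rec_eq[of w rs] assms by blast
  have l: "lastrec rs w = 0" using lastrec_eq[of w rs] assms by blast
  show ?thesis unfolding hperf_def n l Hw_def
    using traj_norec[of w rs w a L x0 vs] traj_norec[of w rs 0 a L x0 vs] assms(1,3) by simp
qed




locale ctx =
  fixes Pr :: "'a measure"
    and v :: "nat \<Rightarrow> 'a \<Rightarrow> real"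
    and \<gamma> :: "nat \<Rightarrow> 'a \<Rightarrow> 'n::finite"
    and r :: "nat \<Rightarrow> 'a \<Rightarrow> bool"
    and a L c M B x0 :: real
    and P0 P1 :: "real^'n^'n" and e :: "real^'n"
    and D :: nat and g0 :: 'n
  assumes a_gt: "\<bar>a\<bar> > 1"
    and abar: "0 < (a + L)\<^sup>2" "(a + L)\<^sup>2 < 1"
    and c_bounds: "(a + L)\<^sup>2 < c\<^sup>2" "c\<^sup>2 < 1"
    and M_pos: "M > 0" and B_pos: "B > 0"
    and P0_st: "col_stochastic P0" and P1_st: "col_stochastic P1"
    and e_range: "\<forall>i. 0 \<le> e $ i \<and> e $ i \<le> 1"
    and rho: "a\<^sup>2 * spec_radius (P1 ** diagm e) < 1"
    and D_pos: "0 < D"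
    and ps: "prob_space Pr"
    and v_meas: "\<forall>k. v k \<in> borel_measurable Pr"
    and v_indep: "prob_space.indep_vars Pr (\<lambda>_. borel) v UNIV"
    and v_ident: "\<forall>k. distr Pr borel (v k) = distr Pr borel (v 0)"
    and v_sq_int: "integrable Pr (\<lambda>\<omega>. (v 0 \<omega>)\<^sup>2)"
    and v_mean: "prob_space.expectation Pr (v 0) = 0"
    and v_var: "prob_space.variance Pr (v 0) = M"
    and \<gamma>_meas: "\<forall>k. \<gamma> k \<in> measurable Pr (count_space UNIV)"
    and r_meas: "\<forall>k. r k \<in> measurable Pr (count_space UNIV)"
    and chan_law: "\<forall>m gs rs. measure Pr {\<omega> \<in> space Pr. (\<forall>k\<le>m. \<gamma> k \<omega> = gs k) \<and> (\<forall>k\<in>{1..m}. r k \<omega> = rs k)}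
                      = chan_prob P0 P1 e D g0 m gs rs"
    and noise_chan_indep:
      "prob_space.indep_set Pr
         (sets (vimage_algebra (space Pr) (\<lambda>\<omega> k. v k \<omega>) (Pi\<^sub>M UNIV (\<lambda>_. borel))))
         (sets (vimage_algebra (space Pr) (\<lambda>\<omega> k. (\<gamma> k \<omega>, r k \<omega>)) (Pi\<^sub>M UNIV (\<lambda>_. count_space UNIV))))"
begin

sublocale prob_space Pr by (rule ps)

lemma v_m[measurable]: "v k \<in> borel_measurable Pr" using v_meas by blast
lemma r_m[measurable]: "r k \<in> measurable Pr (count_space UNIV)" using r_meas by blast
lemma g_m[measurable]: "\<gamma> k \<in> measurable Pr (count_space UNIV)" using \<gamma>_meas by blast

lemma traj_meas: "(\<lambda>\<omega>. fst (traj a L x0 (\<lambda>k. v k \<omega>) (\<lambda>k. r k \<omega>) j)) \<in> borel_measurable Pr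
   \<and> (\<lambda>\<omega>. snd (traj a L x0 (\<lambda>k. v k \<omega>) (\<lambda>k. r k \<omega>) j)) \<in> borel_measurable Pr"
proof (induction j)
  case 0 thus ?case by simp
next
  case (Suc j)
  note [measurable] = Suc[THEN conjunct1] Suc[THEN conjunct2]
  show ?case by (simp add: Let_def) measurable
qed

lemma traj_meas1[measurable]: "(\<lambda>\<omega>. fst (traj a L x0 (\<lambda>k. v k \<omega>) (\<lambda>k. r k \<omega>) j)) \<in> borel_measurable Pr"
  using traj_meas by blast

lemma lastrec_meas[measurable]: "(\<lambda>\<omega>. lastrec (\<lambda>k. r k \<omega>) k) \<in> measurable Pr (count_space UNIV)"
proof -
  have g: "(\<lambda>\<omega>. {i. i < k \<and> (i = 0 \<or> r i \<omega>)}) \<in> measurable Pr (count_space (Pow {..<k}))"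
  proof (rule measurable_count_space_eq2[THEN iffD2], simp, intro conjI ballI)
    show "(\<lambda>\<omega>. {i. i < k \<and> (i = 0 \<or> r i \<omega>)}) \<in> space Pr \<rightarrow> Pow {..<k}" by auto
  next
    fix T assume "T \<in> Pow {..<k}"
    have "(\<lambda>\<omega>. {i. i < k \<and> (i = 0 \<or> r i \<omega>)}) -` {T} \<inter> space Pr
       = {\<omega> \<in> space Pr. \<forall>i. (i \<in> T) = (i < k \<and> (i = 0 \<or> r i \<omega>))}"
      by (auto simp: set_eq_iff)
    also have "\<dots> \<in> sets Pr" by measurable
    finally show "(\<lambda>\<omega>. {i. i < k \<and> (i = 0 \<or> r i \<omega>)}) -` {T} \<inter> space Pr \<in> sets Pr" .
  qed
  have "(\<lambda>\<omega>. Max ({i. i < k \<and> (i = 0 \<or> r i \<omega>)})) \<in> measurable Pr (count_space UNIV)"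
    by (rule measurable_compose_countable'[OF _ g]) (auto intro: countable_finite)
  thus ?thesis unfolding lastrec_def .
qed

lemma next_rec_meas[measurable]: "(\<lambda>\<omega>. next_rec (\<lambda>k. r k \<omega>)) \<in> measurable Pr (count_space UNIV)"
  unfolding next_rec_def by measurable

lemma h_meas[measurable]: "(\<lambda>\<omega>. hperf a L c B x0 (\<lambda>k. v k \<omega>) (\<lambda>k. r k \<omega>) (next_rec (\<lambda>k. r k \<omega>))) \<in> borel_measurable Pr"
proof -
  have "(\<lambda>\<omega>. hperf a L c B x0 (\<lambda>k. v k \<omega>) (\<lambda>k. r k \<omega>) k) \<in> borel_measurable Pr" for k
  proof -
    have "(\<lambda>\<omega>. (\<lambda>j \<omega>. (fst (traj a L x0 (\<lambda>k. v k \<omega>) (\<lambda>k. r k \<omega>) k))\<^sup>2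
       - max (c ^ (2 * (k - j)) * (fst (traj a L x0 (\<lambda>k. v k \<omega>) (\<lambda>k. r k \<omega>) j))\<^sup>2) B)
         (lastrec (\<lambda>k. r k \<omega>) k) \<omega>) \<in> borel_measurable Pr"
      by (rule measurable_compose_countable'[OF _ lastrec_meas]) auto
    thus ?thesis unfolding hperf_def .
  qed
  thus ?thesis by (rule measurable_compose_countable'[OF _ next_rec_meas]) auto
qed


lemma a2_gt: "a\<^sup>2 > 1"
proof -
  have "1 < \<bar>a\<bar> * \<bar>a\<bar>" using a_gt by (metis abs_ge_zero less_1_mult)
  thus ?thesis by (simp add: power2_eq_square abs_mult[symmetric])
qed

lemma pb: "\<exists>s C. pbound (P1 ** diagm e) s C \<and> a\<^sup>2 < s"
proof -
  obtain s C where "s > a\<^sup>2" "\<forall>k i j. \<bar>mpow (P1 ** diagm e) k $ i $ j\<bar> * s ^ k \<le> C"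
    using power_bound[OF rho] a2_gt by fastforce
  moreover hence "s > 0" using a2_gt by simp
  ultimately show ?thesis unfolding pbound_def by blast
qed

definition Ew :: "nat \<Rightarrow> 'a set" where
  "Ew w = {\<omega> \<in> space Pr. 0 < w \<and> r w \<omega> \<and> (\<forall>j. 0 < j \<and> j < w \<longrightarrow> \<not> r j \<omega>)}"

lemma Ew_meas[measurable]: "Ew w \<in> sets Pr"
  unfolding Ew_def by measurable

lemma Ew_disj: "disjoint_family Ew"
  unfolding disjoint_family_on_def Ew_def by (auto, metis linorder_neqE_nat)

abbreviation "Omg \<equiv> Om P0 P1 e D g0"

lemma Ew_prob: "measure Pr (Ew w) = Omg w"
proof (cases "w = 0")
  case True thus ?thesis using D_pos by (simp add: Ew_def Om_def)
next
  case False
  define cyl where "cyl gs = {\<omega> \<in> space Pr. (\<forall>k\<le>w. \<gamma> k \<omega> = gs k) \<and> (\<forall>k\<in>{1..w}. r k \<omega> = (k = w))}"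
    for gs :: "nat \<Rightarrow> 'n"
  have eq: "Ew w = (\<Union>gs\<in>Pi\<^sub>E {..w} (\<lambda>_. UNIV). cyl gs)"
  proof (rule Set.set_eqI, rule iffI)
    fix \<omega> assume "\<omega> \<in> Ew w"
    hence "\<omega> \<in> cyl (restrict (\<lambda>k. \<gamma> k \<omega>) {..w})" using False
      by (auto simp: Ew_def cyl_def) (metis Suc_le_lessD le_neq_implies_less)
    moreover have "restrict (\<lambda>k. \<gamma> k \<omega>) {..w} \<in> Pi\<^sub>E {..w} (\<lambda>_. UNIV)" by simp
    ultimately show "\<omega> \<in> (\<Union>gs\<in>Pi\<^sub>E {..w} (\<lambda>_. UNIV). cyl gs)" by blast
  next
    fix \<omega> assume "\<omega> \<in> (\<Union>gs\<in>Pi\<^sub>E {..w} (\<lambda>_. UNIV). cyl gs)"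
    thus "\<omega> \<in> Ew w" using False by (auto simp: Ew_def cyl_def)
  qed
  have "measure Pr (\<Union>gs\<in>Pi\<^sub>E {..w} (\<lambda>_. UNIV). cyl gs) = (\<Sum>gs\<in>Pi\<^sub>E {..w} (\<lambda>_. UNIV). measure Pr (cyl gs))"
  proof (rule finite_measure_finite_Union)
    show "finite (Pi\<^sub>E {..w} (\<lambda>_. UNIV :: 'n set))" by (simp add: finite_PiE)
    show "cyl ` Pi\<^sub>E {..w} (\<lambda>_. UNIV) \<subseteq> sets Pr" unfolding cyl_def by auto measurable
    show "disjoint_family_on cyl (Pi\<^sub>E {..w} (\<lambda>_. UNIV))"
      unfolding disjoint_family_on_def cyl_def
      by (auto simp: PiE_def extensional_def fun_eq_iff) (metis not_le)
  qed
  also have "\<dots> = (\<Sum>gs\<in>Pi\<^sub>E {..w} (\<lambda>_. UNIV). chan_prob P0 P1 e D g0 w gs (\<lambda>k. k = w))"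
    unfolding cyl_def using chan_law by simp
  also have "\<dots> = Omg w" using path_sum[OF D_pos, of w P0 P1 e g0] False by simp
  finally show ?thesis unfolding eq .
qed

lemma Om_nonneg: "Omg w \<ge> 0"
  unfolding Ew_prob[symmetric] by simp

lemma AE_rec: "AE \<omega> in Pr. \<exists>w. \<omega> \<in> Ew w"
proof -
  obtain s C where s: "pbound (P1 ** diagm e) s C" "a\<^sup>2 < s" using pb by blast
  have s1: "1 < s" using s a2_gt by simp
  have "(\<lambda>w. Omg w * 1 ^ w) sums gt P0 P1 e D 1 g0" by (rule gt_sums[OF s(1)]) (use s1 in auto)
  moreover have "gt P0 P1 e D 1 g0 = 1"
    using gt_one[OF P0_st P1_st pbound.invertible_IA[OF s(1), of 1]] s1 by simp
  ultimately have "(\<lambda>w. measure Pr (Ew w)) sums 1" unfolding Ew_prob by simp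
  moreover have "(\<lambda>w. measure Pr (Ew w)) sums measure Pr (\<Union>w. Ew w)"
    by (rule finite_measure_UNION) (auto simp: Ew_disj)
  ultimately have "prob (\<Union>w. Ew w) = 1" using sums_unique2 by blast
  from AE_prob_1[OF this] show ?thesis by auto
qed

end




context ctx begin

lemma v_transfer: fixes f :: "real \<Rightarrow> real" assumes [measurable]: "f \<in> borel_measurable borel"
  shows "integrable Pr (\<lambda>\<omega>. f (v k \<omega>)) = integrable Pr (\<lambda>\<omega>. f (v 0 \<omega>)) \<and>
         (\<integral>\<omega>. f (v k \<omega>) \<partial>Pr) = (\<integral>\<omega>. f (v 0 \<omega>) \<partial>Pr)"
proof -
  have d: "distr Pr borel (v k) = distr Pr borel (v 0)" using v_ident by blast
  show ?thesis
    using integrable_distr_eq[of "v k" Pr borel f] integrable_distr_eq[of "v 0" Pr borel f]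
      integral_distr[of "v k" Pr borel f] integral_distr[of "v 0" Pr borel f] d by simp
qed

lemma v0_int: "integrable Pr (v 0)"
  by (rule square_integrable_imp_integrable[OF _ v_sq_int]) simp

lemma v_int: "integrable Pr (v k)"
  using v_transfer[of "\<lambda>x. x" k] v0_int by simp

lemma v_sq: "integrable Pr (\<lambda>\<omega>. (v k \<omega>)\<^sup>2)"
  using v_transfer[of "\<lambda>x. x\<^sup>2" k] v_sq_int by simp

lemma v_E: "expectation (v k) = 0"
  using v_transfer[of "\<lambda>x. x" k] v_mean by simp

lemma v_E2: "expectation (\<lambda>\<omega>. (v k \<omega>)\<^sup>2) = M"
  using v_transfer[of "\<lambda>x. x\<^sup>2" k] v_var v_mean by simp

lemma v_pair_indep: assumes "i \<noteq> j" shows "indep_var borel (v i) borel (v j)"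
proof -
  have "indep_var borel ((\<lambda>f. f i) \<circ> (\<lambda>\<omega>. restrict (\<lambda>i. v i \<omega>) {i}))
                  borel ((\<lambda>f. f j) \<circ> (\<lambda>\<omega>. restrict (\<lambda>i. v i \<omega>) {j}))"
    using assms by (intro indep_var_compose[OF indep_var_restrict[OF v_indep]]) auto
  also have "((\<lambda>f. f i) \<circ> (\<lambda>\<omega>. restrict (\<lambda>i. v i \<omega>) {i})) = v i" by auto
  also have "((\<lambda>f. f j) \<circ> (\<lambda>\<omega>. restrict (\<lambda>i. v i \<omega>) {j})) = v j" by auto
  finally show ?thesis .
qed

lemma v_prod_int: "integrable Pr (\<lambda>\<omega>. v i \<omega> * v j \<omega>)"
proof (cases "i = j")
  case True thus ?thesis using v_sq[of i] by (simp add: power2_eq_square)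
next
  case False thus ?thesis using indep_var_integrable[OF v_pair_indep[OF False] v_int v_int] by simp
qed

lemma v_prod_E: "expectation (\<lambda>\<omega>. v i \<omega> * v j \<omega>) = (if i = j then M else 0)"
proof (cases "i = j")
  case True thus ?thesis using v_E2[of i] by (simp add: power2_eq_square)
next
  case False thus ?thesis using indep_var_lebesgue_integral[OF v_pair_indep[OF False] v_int v_int] v_E by simp
qed

lemma Zsq: "integrable Pr (\<lambda>\<omega>. (\<Sum>i<w. cf i * v i \<omega>)\<^sup>2) \<and>
    expectation (\<lambda>\<omega>. (\<Sum>i<w. cf i * v i \<omega>)\<^sup>2) = M * (\<Sum>i<w. (cf i)\<^sup>2)"
proof -
  have eq: "(\<lambda>\<omega>. (\<Sum>i<w. cf i * v i \<omega>)\<^sup>2) = (\<lambda>\<omega>. \<Sum>i<w. \<Sum>j<w. cf i * cf j * (v i \<omega> * v j \<omega>))"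
    by (simp add: power2_eq_square sum_product mult_ac)
  have int: "integrable Pr (\<lambda>\<omega>. \<Sum>i<w. \<Sum>j<w. cf i * cf j * (v i \<omega> * v j \<omega>))"
    by (intro Bochner_Integration.integrable_sum integrable_mult_right v_prod_int)
  have "expectation (\<lambda>\<omega>. \<Sum>i<w. \<Sum>j<w. cf i * cf j * (v i \<omega> * v j \<omega>))
      = (\<Sum>i<w. \<Sum>j<w. cf i * cf j * (if i = j then M else 0))"
    by (simp add: Bochner_Integration.integral_sum integrable_mult_right v_prod_int v_prod_E
        Bochner_Integration.integrable_sum)
  also have "\<dots> = M * (\<Sum>i<w. (cf i)\<^sup>2)"
    by (simp add: if_distrib sum_distrib_left power2_eq_square mult_ac cong: if_cong)
  finally show ?thesis unfolding eq using int by simp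
qed

lemma Z_int: "integrable Pr (\<lambda>\<omega>. \<Sum>i<w. cf i * v i \<omega>) \<and> expectation (\<lambda>\<omega>. \<Sum>i<w. cf i * v i \<omega>) = 0"
  using v_int v_E by (simp add: Bochner_Integration.integral_sum integrable_mult_right
        Bochner_Integration.integrable_sum)

definition EH :: "nat \<Rightarrow> real" where
  "EH w = ((a + L)\<^sup>2) ^ w * x0\<^sup>2 + M / (a\<^sup>2 - 1) * ((a\<^sup>2) ^ w - 1) - max (c ^ (2 * w) * x0\<^sup>2) B"

lemma pow_sq_swap: "((x::real) ^ n)\<^sup>2 = (x\<^sup>2) ^ n"
  by (simp add: power_mult[symmetric] mult.commute)

lemma geo: "(\<Sum>i<w. (a ^ (w - 1 - i))\<^sup>2) = ((a\<^sup>2) ^ w - 1) / (a\<^sup>2 - 1)"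
proof -
  have "(\<Sum>i<w. (a ^ (w - 1 - i))\<^sup>2) = (\<Sum>i<w. (a\<^sup>2) ^ (w - Suc i))"
    by (simp add: pow_sq_swap)
  also have "\<dots> = (\<Sum>i<w. (a\<^sup>2) ^ i)" by (rule sum.nat_diff_reindex)
  also have "\<dots> = ((a\<^sup>2) ^ w - 1) / (a\<^sup>2 - 1)"
    using a2_gt by (simp add: sum_gp_strict field_simps)
  finally show ?thesis .
qed

lemma H_int: "integrable Pr (\<lambda>\<omega>. Hw a L c B x0 w (\<lambda>k. v k \<omega>)) \<and>
    expectation (\<lambda>\<omega>. Hw a L c B x0 w (\<lambda>k. v k \<omega>)) = EH w"
proof -
  define q where "q = (a + L) ^ w * x0"
  define Z where "Z \<omega> = (\<Sum>i<w. a ^ (w - 1 - i) * v i \<omega>)" for \<omega>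
  define m where "m = max (c ^ (2 * w) * x0\<^sup>2) B"
  have e: "(\<lambda>\<omega>. Hw a L c B x0 w (\<lambda>k. v k \<omega>)) = (\<lambda>\<omega>. q\<^sup>2 + (Z \<omega>)\<^sup>2 + 2 * q * Z \<omega> - m)"
    by (simp add: Hw_def q_def Z_def m_def power2_sum)
  have Zi: "integrable Pr Z" "expectation Z = 0" using Z_int[where w=w and cf="\<lambda>i. a ^ (w - 1 - i)"] unfolding Z_def by auto
  have Z2: "integrable Pr (\<lambda>\<omega>. (Z \<omega>)\<^sup>2)" "expectation (\<lambda>\<omega>. (Z \<omega>)\<^sup>2) = M * (\<Sum>i<w. (a ^ (w - 1 - i))\<^sup>2)"
    using Zsq[where w=w and cf="\<lambda>i. a ^ (w - 1 - i)"] unfolding Z_def by auto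
  have "integrable Pr (\<lambda>\<omega>. q\<^sup>2 + (Z \<omega>)\<^sup>2 + 2 * q * Z \<omega> - m)"
    using Zi Z2 by simp
  moreover have "expectation (\<lambda>\<omega>. q\<^sup>2 + (Z \<omega>)\<^sup>2 + 2 * q * Z \<omega> - m) = q\<^sup>2 + M * (\<Sum>i<w. (a ^ (w - 1 - i))\<^sup>2) - m"
    using Zi Z2 by (simp add: prob_space)
  moreover have "q\<^sup>2 + M * (\<Sum>i<w. (a ^ (w - 1 - i))\<^sup>2) - m = EH w"
  proof -
    have "q\<^sup>2 = ((a + L)\<^sup>2) ^ w * x0\<^sup>2" unfolding q_def by (simp add: power_mult_distrib pow_sq_swap)
    moreover have "M * (((a\<^sup>2) ^ w - 1) / (a\<^sup>2 - 1)) = M / (a\<^sup>2 - 1) * ((a\<^sup>2) ^ w - 1)" by simp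
    ultimately show ?thesis unfolding geo EH_def m_def by simp
  qed
  ultimately show ?thesis unfolding e by simp
qed

end




context ctx begin

lemma X_meas[measurable]: "(\<lambda>\<omega> k. v k \<omega>) \<in> measurable Pr (Pi\<^sub>M UNIV (\<lambda>_. borel))"
  by (rule measurable_PiM_single') auto

lemma pair_meas: "(\<lambda>\<omega>. (\<gamma> k \<omega>, r k \<omega>)) \<in> measurable Pr (count_space UNIV)"
proof (rule measurable_count_space_eq2_countable[THEN iffD2], intro conjI ballI)
  show "(\<lambda>\<omega>. (\<gamma> k \<omega>, r k \<omega>)) \<in> space Pr \<rightarrow> UNIV" by simp
  fix p :: "'n \<times> bool"
  have "(\<lambda>\<omega>. (\<gamma> k \<omega>, r k \<omega>)) -` {p} \<inter> space Pr = {\<omega> \<in> space Pr. \<gamma> k \<omega> = fst p \<and> r k \<omega> = snd p}"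
    by (cases p) auto
  also have "\<dots> \<in> sets Pr" by measurable
  finally show "(\<lambda>\<omega>. (\<gamma> k \<omega>, r k \<omega>)) -` {p} \<inter> space Pr \<in> sets Pr" .
qed

lemma Y_meas[measurable]: "(\<lambda>\<omega> k. (\<gamma> k \<omega>, r k \<omega>)) \<in> measurable Pr (Pi\<^sub>M UNIV (\<lambda>_. count_space UNIV))"
  by (rule measurable_PiM_single') (simp_all add: pair_meas)

lemma vimage_sub:
  assumes Z[measurable]: "Z \<in> measurable Pr N" and F[measurable]: "F \<in> borel_measurable N"
  shows "sigma_sets (space Pr) {(\<lambda>\<omega>. F (Z \<omega>) :: real) -` A \<inter> space Pr | A. A \<in> sets borel}
         \<subseteq> sets (vimage_algebra (space Pr) Z N)"
proof -
  have "{(\<lambda>\<omega>. F (Z \<omega>) :: real) -` A \<inter> space Pr | A. A \<in> sets borel} \<subseteq> sets (vimage_algebra (space Pr) Z N)"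
  proof
    fix S assume "S \<in> {(\<lambda>\<omega>. F (Z \<omega>) :: real) -` A \<inter> space Pr | A. A \<in> sets borel}"
    then obtain A where A: "A \<in> sets borel" "S = (\<lambda>\<omega>. F (Z \<omega>)) -` A \<inter> space Pr" by blast
    have "S = Z -` (F -` A \<inter> space N) \<inter> space Pr" using A measurable_space[OF Z] by auto
    moreover have "F -` A \<inter> space N \<in> sets N" using A(1) by measurable
    ultimately show "S \<in> sets (vimage_algebra (space Pr) Z N)"
      using sets_vimage_algebra2[of Z "space Pr" N] measurable_space[OF Z] by blast
  qed
  from sets.sigma_sets_subset[OF this] show ?thesis by simp
qed

lemma indep_FG:
  assumes F[measurable]: "F \<in> borel_measurable (Pi\<^sub>M UNIV (\<lambda>_. borel))"
    and G[measurable]: "G \<in> borel_measurable (Pi\<^sub>M UNIV (\<lambda>_. count_space UNIV))"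
  shows "indep_var borel (\<lambda>\<omega>. F (\<lambda>k. v k \<omega>) :: real) borel (\<lambda>\<omega>. G (\<lambda>k. (\<gamma> k \<omega>, r k \<omega>)))"
  unfolding indep_var_eq
proof (intro conjI)
  show "random_variable borel (\<lambda>\<omega>. F (\<lambda>k. v k \<omega>))" "random_variable borel (\<lambda>\<omega>. G (\<lambda>k. (\<gamma> k \<omega>, r k \<omega>)))"
    by measurable
  have s1: "sigma_sets (space Pr) {(\<lambda>\<omega>. F (\<lambda>k. v k \<omega>)) -` A \<inter> space Pr | A. A \<in> sets borel}
     \<subseteq> sets (vimage_algebra (space Pr) (\<lambda>\<omega> k. v k \<omega>) (Pi\<^sub>M UNIV (\<lambda>_. borel)))"
    by (rule vimage_sub[OF X_meas F])
  have s2: "sigma_sets (space Pr) {(\<lambda>\<omega>. G (\<lambda>k. (\<gamma> k \<omega>, r k \<omega>))) -` A \<inter> space Pr | A. A \<in> sets borel}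
     \<subseteq> sets (vimage_algebra (space Pr) (\<lambda>\<omega> k. (\<gamma> k \<omega>, r k \<omega>)) (Pi\<^sub>M UNIV (\<lambda>_. count_space UNIV)))"
    by (rule vimage_sub[OF Y_meas G])
  show "indep_set (sigma_sets (space Pr) {(\<lambda>\<omega>. F (\<lambda>k. v k \<omega>)) -` A \<inter> space Pr | A. A \<in> sets borel})
     (sigma_sets (space Pr) {(\<lambda>\<omega>. G (\<lambda>k. (\<gamma> k \<omega>, r k \<omega>))) -` A \<inter> space Pr | A. A \<in> sets borel})"
    unfolding indep_set_def
    by (rule indep_sets_mono_sets[OF noise_chan_indep[unfolded indep_set_def]])
       (use s1 s2 in \<open>auto split: bool.split\<close>)
qed

lemma indep_prod:
  assumes F[measurable]: "F \<in> borel_measurable (Pi\<^sub>M UNIV (\<lambda>_. borel))"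
    and G[measurable]: "G \<in> borel_measurable (Pi\<^sub>M UNIV (\<lambda>_. count_space UNIV))"
    and iF: "integrable Pr (\<lambda>\<omega>. F (\<lambda>k. v k \<omega>))" and iG: "integrable Pr (\<lambda>\<omega>. G (\<lambda>k. (\<gamma> k \<omega>, r k \<omega>)))"
  shows "integrable Pr (\<lambda>\<omega>. F (\<lambda>k. v k \<omega>) * (G (\<lambda>k. (\<gamma> k \<omega>, r k \<omega>)) :: real))
     \<and> (\<integral>\<omega>. F (\<lambda>k. v k \<omega>) * G (\<lambda>k. (\<gamma> k \<omega>, r k \<omega>)) \<partial>Pr)
        = (\<integral>\<omega>. F (\<lambda>k. v k \<omega>) \<partial>Pr) * (\<integral>\<omega>. G (\<lambda>k. (\<gamma> k \<omega>, r k \<omega>)) \<partial>Pr)"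
proof -
  note ind = indep_FG[OF F G]
  from indep_var_lebesgue_integral[OF ind iF iG] indep_var_integrable[OF ind iF iG]
  show ?thesis by simp
qed

definition Sw :: "nat \<Rightarrow> (nat \<Rightarrow> 'n \<times> bool) set" where
  "Sw w = {y. 0 < w \<and> snd (y w) \<and> (\<forall>j. 0 < j \<and> j < w \<longrightarrow> \<not> snd (y j))}"

lemma snd_comp_meas[measurable]: "(\<lambda>y. snd (y j)) \<in> measurable (Pi\<^sub>M UNIV (\<lambda>_. count_space UNIV)) (count_space (UNIV::bool set))"
  by (rule measurable_compose[OF measurable_component_singleton]) auto

lemma Sw_meas[measurable]: "Sw w \<in> sets (Pi\<^sub>M UNIV (\<lambda>_. count_space (UNIV :: ('n \<times> bool) set)))"
proof -
  have "Sw w = {y \<in> space (Pi\<^sub>M UNIV (\<lambda>_. count_space (UNIV :: ('n \<times> bool) set))). 0 < w \<and> snd (y w) \<and> (\<forall>j. 0 < j \<and> j < w \<longrightarrow> \<not> snd (y j))}"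
    by (auto simp: Sw_def space_PiM)
  also have "\<dots> \<in> sets (Pi\<^sub>M UNIV (\<lambda>_. count_space (UNIV :: ('n \<times> bool) set)))" by measurable
  finally show ?thesis .
qed

lemma Sw_ind: "\<omega> \<in> space Pr \<Longrightarrow> indicator (Sw w) (\<lambda>k. (\<gamma> k \<omega>, r k \<omega>)) = (indicator (Ew w) \<omega> :: real)"
  by (simp add: Sw_def Ew_def indicator_def)

lemma Hw_meas[measurable]: "(\<lambda>s. Hw a L c B x0 w s) \<in> borel_measurable (Pi\<^sub>M UNIV (\<lambda>_. borel))"
proof -
  have c[measurable]: "(\<lambda>s. s i) \<in> borel_measurable (Pi\<^sub>M UNIV (\<lambda>_. borel))" for i :: nat
    by (rule measurable_component_singleton) simp
  show ?thesis unfolding Hw_def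
    by (intro borel_measurable_diff borel_measurable_power borel_measurable_add borel_measurable_sum
        borel_measurable_const borel_measurable_times c)
qed

lemma Ew_int: assumes F[measurable]: "F \<in> borel_measurable (Pi\<^sub>M UNIV (\<lambda>_. borel))"
  and iF: "integrable Pr (\<lambda>\<omega>. F (\<lambda>k. v k \<omega>))"
  shows "integrable Pr (\<lambda>\<omega>. F (\<lambda>k. v k \<omega>) * indicator (Ew w) \<omega>)
    \<and> (\<integral>\<omega>. F (\<lambda>k. v k \<omega>) * indicator (Ew w) \<omega> \<partial>Pr) = (\<integral>\<omega>. F (\<lambda>k. v k \<omega>) \<partial>Pr) * Omg w"
proof -
  have iG: "integrable Pr (\<lambda>\<omega>. indicator (Sw w) (\<lambda>k. (\<gamma> k \<omega>, r k \<omega>)) :: real)"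
    by (subst Bochner_Integration.integrable_cong[OF refl Sw_ind]) (auto intro!: integrable_real_indicator simp: Ew_meas emeasure_eq_measure)
  have eG: "(\<integral>\<omega>. indicator (Sw w) (\<lambda>k. (\<gamma> k \<omega>, r k \<omega>)) \<partial>Pr) = Omg w"
    by (subst Bochner_Integration.integral_cong[OF refl Sw_ind]) (auto simp: Ew_prob)
  have "integrable Pr (\<lambda>\<omega>. F (\<lambda>k. v k \<omega>) * indicator (Sw w) (\<lambda>k. (\<gamma> k \<omega>, r k \<omega>)))
     \<and> (\<integral>\<omega>. F (\<lambda>k. v k \<omega>) * indicator (Sw w) (\<lambda>k. (\<gamma> k \<omega>, r k \<omega>)) \<partial>Pr)
        = (\<integral>\<omega>. F (\<lambda>k. v k \<omega>) \<partial>Pr) * Omg w"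
    using indep_prod[OF F _ iF iG] eG by simp
  moreover have "integrable Pr (\<lambda>\<omega>. F (\<lambda>k. v k \<omega>) * indicator (Sw w) (\<lambda>k. (\<gamma> k \<omega>, r k \<omega>)))
     = integrable Pr (\<lambda>\<omega>. F (\<lambda>k. v k \<omega>) * indicator (Ew w) \<omega>)"
    by (rule Bochner_Integration.integrable_cong) (simp_all add: Sw_ind)
  moreover have "(\<integral>\<omega>. F (\<lambda>k. v k \<omega>) * indicator (Sw w) (\<lambda>k. (\<gamma> k \<omega>, r k \<omega>)) \<partial>Pr)
     = (\<integral>\<omega>. F (\<lambda>k. v k \<omega>) * indicator (Ew w) \<omega> \<partial>Pr)"
    by (rule Bochner_Integration.integral_cong) (simp_all add: Sw_ind)
  ultimately show ?thesis by simp
qed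

end




context ctx begin

abbreviation "\<nu>0 \<equiv> nu D B c x0"

lemma nu_ge: "D \<le> \<nu>0"
  unfolding nu_def by auto

lemma c2_pos: "c\<^sup>2 > 0" using abar c_bounds by linarith

lemma max_split: assumes "D \<le> w"
  shows "max (c ^ (2 * w) * x0\<^sup>2) B =
    (if \<nu>0 \<le> w then B else c ^ (2 * w) * x0\<^sup>2)"
proof (cases "x0 = 0")
  case True thus ?thesis using B_pos assms by (simp add: nu_def)
next
  case False
  define Lg where "Lg = ln (x0\<^sup>2 / B) / ln (1 / c\<^sup>2)"
  have lpos: "ln (1 / c\<^sup>2) > 0" using c2_pos c_bounds by simp
  have x2: "x0\<^sup>2 / B > 0" using False B_pos by simp
  have nu: "\<nu>0 = nat (max (int D) \<lceil>Lg\<rceil>)" using False unfolding nu_def Lg_def by simp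
  have key: "c ^ (2 * w) * x0\<^sup>2 \<le> B \<longleftrightarrow> Lg \<le> w"
  proof -
    have "Lg \<le> w \<longleftrightarrow> ln (x0\<^sup>2 / B) \<le> w * ln (1 / c\<^sup>2)"
      unfolding Lg_def using lpos by (simp add: divide_le_eq)
    also have "w * ln (1 / c\<^sup>2) = ln ((1 / c\<^sup>2) ^ w)" using c2_pos by (simp add: ln_realpow)
    also have "ln (x0\<^sup>2 / B) \<le> ln ((1 / c\<^sup>2) ^ w) \<longleftrightarrow> x0\<^sup>2 / B \<le> (1 / c\<^sup>2) ^ w"
      using x2 c2_pos by (intro ln_le_cancel_iff) auto
    also have "x0\<^sup>2 / B \<le> (1 / c\<^sup>2) ^ w \<longleftrightarrow> c ^ (2 * w) * x0\<^sup>2 \<le> B"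
      using B_pos c2_pos by (simp add: field_simps power_mult power_divide pow_sq_swap)
    finally show ?thesis by simp
  qed
  have "\<nu>0 \<le> w \<longleftrightarrow> Lg \<le> w" unfolding nu using assms by (simp add: nat_le_iff ceiling_le_iff)
  thus ?thesis using key by auto
qed

lemma EH_sums: "(\<lambda>w. EH w * Omg w) sums
   (gt P0 P1 e D ((a + L)\<^sup>2) g0 * x0\<^sup>2
        + M / (a\<^sup>2 - 1) * (gt P0 P1 e D (a\<^sup>2) g0 - gt P0 P1 e D 1 g0)
        - (B * ft P0 P1 e D \<nu>0 1 g0
           + x0\<^sup>2 * (gt P0 P1 e D (c\<^sup>2) g0 - ft P0 P1 e D \<nu>0 (c\<^sup>2) g0)))"
proof -
  obtain s C where s: "pbound (P1 ** diagm e) s C" "a\<^sup>2 < s" using pb by blast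
  have b1: "(a + L)\<^sup>2 < s" "c\<^sup>2 < s" "1 < s" using s(2) a2_gt abar c_bounds by linarith+
  note S1 = gt_sums[OF s(1), of "(a + L)\<^sup>2" P0 D g0] and S2 = gt_sums[OF s(1), of "a\<^sup>2" P0 D g0]
   and S3 = gt_sums[OF s(1), of 1 P0 D g0] and S4 = gt_sums[OF s(1), of "c\<^sup>2" P0 D g0]
   and T1 = ft_sums[OF s(1), of 1 D \<nu>0 P0 g0] and T2 = ft_sums[OF s(1), of "c\<^sup>2" D \<nu>0 P0 g0]
  have all: "(\<lambda>w. x0\<^sup>2 * (Omg w * ((a + L)\<^sup>2) ^ w) + M / (a\<^sup>2 - 1) * (Omg w * (a\<^sup>2) ^ w - Omg w * 1 ^ w)
      - (B * (if \<nu>0 \<le> w then Omg w * 1 ^ w else 0) + x0\<^sup>2 * (Omg w * (c\<^sup>2) ^ w - (if \<nu>0 \<le> w then Omg w * (c\<^sup>2) ^ w else 0))))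
     sums (x0\<^sup>2 * gt P0 P1 e D ((a + L)\<^sup>2) g0 + M / (a\<^sup>2 - 1) * (gt P0 P1 e D (a\<^sup>2) g0 - gt P0 P1 e D 1 g0)
        - (B * ft P0 P1 e D \<nu>0 1 g0 + x0\<^sup>2 * (gt P0 P1 e D (c\<^sup>2) g0 - ft P0 P1 e D \<nu>0 (c\<^sup>2) g0)))"
    using b1 abar c2_pos nu_ge s(2)
    by (intro sums_add sums_diff sums_mult S1 S2 S3 S4 T1 T2) auto
  have eq: "EH w * Omg w = x0\<^sup>2 * (Omg w * ((a + L)\<^sup>2) ^ w) + M / (a\<^sup>2 - 1) * (Omg w * (a\<^sup>2) ^ w - Omg w * 1 ^ w)
      - (B * (if \<nu>0 \<le> w then Omg w * 1 ^ w else 0) + x0\<^sup>2 * (Omg w * (c\<^sup>2) ^ w - (if \<nu>0 \<le> w then Omg w * (c\<^sup>2) ^ w else 0)))" for w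
  proof (cases "D \<le> w")
    case False
    hence "Omg w = 0" by (simp add: Om_def)
    moreover have "\<not> \<nu>0 \<le> w" using False nu_ge by linarith
    ultimately show ?thesis by simp
  next
    case True
    have "c ^ (2 * w) = (c\<^sup>2) ^ w" by (simp add: power_mult)
    thus ?thesis unfolding EH_def max_split[OF True] by (simp add: algebra_simps diff_divide_distrib)
  qed
  show ?thesis using all unfolding eq[symmetric] by (simp add: mult.commute)
qed

end




context ctx begin

lemma absH_bound: "expectation (\<lambda>\<omega>. \<bar>Hw a L c B x0 w (\<lambda>k. v k \<omega>)\<bar>) \<le> (2 * x0\<^sup>2 + M / (a\<^sup>2 - 1) + B) * (a\<^sup>2) ^ w"
proof -
  define m where "m = max (c ^ (2 * w) * x0\<^sup>2) B"
  have Hge: "Hw a L c B x0 w s \<ge> - m" for s unfolding Hw_def m_def by simp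
  have pt: "\<bar>Hw a L c B x0 w s\<bar> \<le> Hw a L c B x0 w s + 2 * m" for s
  proof -
    have "m \<ge> 0" unfolding m_def using B_pos by (simp add: le_max_iff_disj)
    thus ?thesis using Hge[of s] by (cases "Hw a L c B x0 w s \<ge> 0") auto
  qed
  have HI: "integrable Pr (\<lambda>\<omega>. Hw a L c B x0 w (\<lambda>k. v k \<omega>))" using H_int by blast
  have "expectation (\<lambda>\<omega>. \<bar>Hw a L c B x0 w (\<lambda>k. v k \<omega>)\<bar>) \<le> expectation (\<lambda>\<omega>. Hw a L c B x0 w (\<lambda>k. v k \<omega>) + 2 * m)"
    by (rule integral_mono) (use HI pt in auto)
  also have "\<dots> = EH w + 2 * m" using H_int HI by (simp add: prob_space)
  also have "\<dots> \<le> (2 * x0\<^sup>2 + M / (a\<^sup>2 - 1) + B) * (a\<^sup>2) ^ w"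
  proof -
    have A1: "1 \<le> (a\<^sup>2) ^ w" using a2_gt by (simp add: one_le_power)
    have A2: "((a + L)\<^sup>2) ^ w \<le> 1" using abar by (simp add: power_le_one)
    have A3: "c ^ (2 * w) \<le> 1" using c_bounds by (simp add: power_mult power_le_one)
    have Mb: "M / (a\<^sup>2 - 1) \<ge> 0" using M_pos a2_gt by simp
    have x2: "x0\<^sup>2 \<ge> 0" by simp
    have "c ^ (2 * w) * x0\<^sup>2 \<le> 1 * x0\<^sup>2" using A3 x2 by (intro mult_right_mono) auto
    hence m1: "m \<le> x0\<^sup>2 + B" unfolding m_def using x2 B_pos by simp
    have "((a + L)\<^sup>2) ^ w * x0\<^sup>2 \<le> x0\<^sup>2" using A2 x2 by (simp add: mult_left_le_one_le)
    have "EH w + 2 * m = ((a + L)\<^sup>2) ^ w * x0\<^sup>2 + M / (a\<^sup>2 - 1) * ((a\<^sup>2) ^ w - 1) + m"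
      unfolding EH_def m_def by simp
    also have "\<dots> \<le> x0\<^sup>2 + M / (a\<^sup>2 - 1) * (a\<^sup>2) ^ w + (x0\<^sup>2 + B)"
      using \<open>((a + L)\<^sup>2) ^ w * x0\<^sup>2 \<le> x0\<^sup>2\<close> m1 Mb by (simp add: right_diff_distrib)
    also have "\<dots> \<le> (2 * x0\<^sup>2 + M / (a\<^sup>2 - 1) + B) * (a\<^sup>2) ^ w"
    proof -
      have "(2 * x0\<^sup>2 + B) * 1 \<le> (2 * x0\<^sup>2 + B) * (a\<^sup>2) ^ w"
        using A1 x2 B_pos by (intro mult_left_mono) auto
      thus ?thesis by (simp add: algebra_simps)
    qed
    finally show ?thesis .
  qed
  finally show ?thesis .
qed

lemma main_ctx: "integrable Pr (\<lambda>\<omega>. hperf a L c B x0 (\<lambda>k. v k \<omega>) (\<lambda>k. r k \<omega>) (next_rec (\<lambda>k. r k \<omega>)))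
    \<and> expectation
        (\<lambda>\<omega>. hperf a L c B x0 (\<lambda>k. v k \<omega>) (\<lambda>k. r k \<omega>) (next_rec (\<lambda>k. r k \<omega>)))
      = gt P0 P1 e D ((a + L)\<^sup>2) g0 * x0\<^sup>2
        + M / (a\<^sup>2 - 1) * (gt P0 P1 e D (a\<^sup>2) g0 - gt P0 P1 e D 1 g0)
        - (B * ft P0 P1 e D (nu D B c x0) 1 g0
           + x0\<^sup>2 * (gt P0 P1 e D (c\<^sup>2) g0 - ft P0 P1 e D (nu D B c x0) (c\<^sup>2) g0))"
proof -
  define h where "h \<omega> = hperf a L c B x0 (\<lambda>k. v k \<omega>) (\<lambda>k. r k \<omega>) (next_rec (\<lambda>k. r k \<omega>))" for \<omega>
  define f where "f w \<omega> = Hw a L c B x0 w (\<lambda>k. v k \<omega>) * indicator (Ew w) \<omega>" for w \<omega>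
  define K where "K = 2 * x0\<^sup>2 + M / (a\<^sup>2 - 1) + B"
  have hm[measurable]: "h \<in> borel_measurable Pr" unfolding h_def by (rule h_meas)
  have fi: "integrable Pr (f w)" "integral\<^sup>L Pr (f w) = EH w * Omg w" for w
    using Ew_int[OF Hw_meas, of w w] H_int[of w] unfolding f_def by auto
  have absHm: "(\<lambda>s. \<bar>Hw a L c B x0 w s\<bar>) \<in> borel_measurable (Pi\<^sub>M UNIV (\<lambda>_. borel))" for w
    using Hw_meas by measurable
  have fa: "(\<integral>\<omega>. norm (f w \<omega>) \<partial>Pr) \<le> K * ((a\<^sup>2) ^ w * Omg w)" for w
  proof -
    have "(\<integral>\<omega>. norm (f w \<omega>) \<partial>Pr) = (\<integral>\<omega>. \<bar>Hw a L c B x0 w (\<lambda>k. v k \<omega>)\<bar> * indicator (Ew w) \<omega> \<partial>Pr)"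
      unfolding f_def by (simp add: abs_mult)
    also have "\<dots> = expectation (\<lambda>\<omega>. \<bar>Hw a L c B x0 w (\<lambda>k. v k \<omega>)\<bar>) * Omg w"
      using Ew_int[OF absHm, of w w] H_int[of w] by auto
    also have "\<dots> \<le> K * (a\<^sup>2) ^ w * Omg w"
      using absH_bound[of w] Om_nonneg[of w] unfolding K_def by (intro mult_right_mono) auto
    finally show ?thesis by (simp add: mult.assoc)
  qed
  obtain s C where s: "pbound (P1 ** diagm e) s C" "a\<^sup>2 < s" using pb by blast
  have "summable (\<lambda>w. Omg w * (a\<^sup>2) ^ w)"
    using gt_sums[OF s(1), of "a\<^sup>2"] s(2) by (auto simp: sums_iff)
  hence sK: "summable (\<lambda>w. K * ((a\<^sup>2) ^ w * Omg w))" by (simp add: mult.commute summable_mult)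
  have sumint: "summable (\<lambda>w. \<integral>\<omega>. norm (f w \<omega>) \<partial>Pr)"
    by (rule summable_comparison_test'[OF sK]) (use fa in auto)
  have single: "\<exists>w0. \<forall>w. w \<noteq> w0 \<longrightarrow> f w \<omega> = 0" for \<omega>
  proof (cases "\<exists>w0. \<omega> \<in> Ew w0")
    case True
    then obtain w0 where "\<omega> \<in> Ew w0" by blast
    hence "\<omega> \<notin> Ew w" if "w \<noteq> w0" for w using Ew_disj that unfolding disjoint_family_on_def by blast
    thus ?thesis unfolding f_def by (intro exI[of _ w0]) (simp add: indicator_def)
  next
    case False thus ?thesis unfolding f_def by auto
  qed
  have sums1: "(\<lambda>w. g w) sums g w0" if "\<forall>w. w \<noteq> w0 \<longrightarrow> g w = 0" for g :: "nat \<Rightarrow> real" and w0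
  proof -
    have "g = (\<lambda>w. if w = w0 then g w else 0)" using that by auto
    thus ?thesis using sums_single[of w0 g] by metis
  qed
  have AEs: "AE \<omega> in Pr. summable (\<lambda>w. norm (f w \<omega>))"
  proof (rule AE_I2)
    fix \<omega>
    obtain w0 where "\<forall>w. w \<noteq> w0 \<longrightarrow> f w \<omega> = 0" using single by blast
    hence "\<forall>w. w \<noteq> w0 \<longrightarrow> norm (f w \<omega>) = 0" by simp
    from sums1[OF this] show "summable (\<lambda>w. norm (f w \<omega>))" by (auto simp: sums_iff)
  qed
  have Si: "integrable Pr (\<lambda>\<omega>. \<Sum>w. f w \<omega>)"
    by (rule integrable_suminf[OF fi(1) AEs sumint])
  have Ss: "(\<lambda>w. integral\<^sup>L Pr (f w)) sums (\<integral>\<omega>. (\<Sum>w. f w \<omega>) \<partial>Pr)"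
    by (rule sums_integral[OF fi(1) AEs sumint])
  have AEeq: "AE \<omega> in Pr. h \<omega> = (\<Sum>w. f w \<omega>)"
    using AE_rec
  proof (rule AE_mp, intro AE_I2 impI)
    fix \<omega> assume "\<omega> \<in> space Pr" "\<exists>w. \<omega> \<in> Ew w"
    then obtain w0 where w0: "\<omega> \<in> Ew w0" by blast
    hence "\<omega> \<notin> Ew w" if "w \<noteq> w0" for w using Ew_disj that unfolding disjoint_family_on_def by blast
    hence z: "\<forall>w. w \<noteq> w0 \<longrightarrow> f w \<omega> = 0" unfolding f_def by (simp add: indicator_def)
    have "(\<Sum>w. f w \<omega>) = f w0 \<omega>" using sums1[OF z] by (simp add: sums_iff)
    also have "\<dots> = Hw a L c B x0 w0 (\<lambda>k. v k \<omega>)" using w0 unfolding f_def by simp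
    also have "\<dots> = h \<omega>" unfolding h_def using w0
      by (intro hperf_eq[symmetric]) (auto simp: Ew_def)
    finally show "h \<omega> = (\<Sum>w. f w \<omega>)" by simp
  qed
  have Sm: "(\<lambda>\<omega>. \<Sum>w. f w \<omega>) \<in> borel_measurable Pr" using Si by (rule borel_measurable_integrable)
  have hi: "integrable Pr h" using integrable_cong_AE[OF hm Sm AEeq] Si by simp
  have "integral\<^sup>L Pr h = (\<integral>\<omega>. (\<Sum>w. f w \<omega>) \<partial>Pr)" using integral_cong_AE[OF hm Sm AEeq] .
  hence "(\<lambda>w. EH w * Omg w) sums integral\<^sup>L Pr h" using Ss unfolding fi(2) by simp
  hence "integral\<^sup>L Pr h = gt P0 P1 e D ((a + L)\<^sup>2) g0 * x0\<^sup>2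
        + M / (a\<^sup>2 - 1) * (gt P0 P1 e D (a\<^sup>2) g0 - gt P0 P1 e D 1 g0)
        - (B * ft P0 P1 e D (nu D B c x0) 1 g0
           + x0\<^sup>2 * (gt P0 P1 e D (c\<^sup>2) g0 - ft P0 P1 e D (nu D B c x0) (c\<^sup>2) g0))"
    using EH_sums sums_unique2 by blast
  thus ?thesis using hi unfolding h_def by simp
qed

end


theorem mainTheorem2:
  fixes Pr :: "'a measure"
    and v :: "nat \<Rightarrow> 'a \<Rightarrow> real"
    and \<gamma> :: "nat \<Rightarrow> 'a \<Rightarrow> 'n::finite"
    and r :: "nat \<Rightarrow> 'a \<Rightarrow> bool"
    and a L c M B x0 :: real
    and P0 P1 :: "real^'n^'n" and e :: "real^'n"
    and D :: nat and g0 :: 'n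
  assumes a_gt: "\<bar>a\<bar> > 1"
    and abar: "0 < (a + L)\<^sup>2" "(a + L)\<^sup>2 < 1"
    and c_bounds: "(a + L)\<^sup>2 < c\<^sup>2" "c\<^sup>2 < 1"
    and M_pos: "M > 0" and B_pos: "B > 0"
    and P0_st: "col_stochastic P0" and P1_st: "col_stochastic P1"
    and e_range: "\<forall>i. 0 \<le> e $ i \<and> e $ i \<le> 1"
    and rho: "a\<^sup>2 * spec_radius (P1 ** diagm e) < 1"
    and D_pos: "0 < D"
    and ps: "prob_space Pr"
    and v_meas: "\<forall>k. v k \<in> borel_measurable Pr"
    and v_indep: "prob_space.indep_vars Pr (\<lambda>_. borel) v UNIV"
    and v_ident: "\<forall>k. distr Pr borel (v k) = distr Pr borel (v 0)"
    and v_sq_int: "integrable Pr (\<lambda>\<omega>. (v 0 \<omega>)\<^sup>2)"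
    and v_mean: "prob_space.expectation Pr (v 0) = 0"
    and v_var: "prob_space.variance Pr (v 0) = M"
    and \<gamma>_meas: "\<forall>k. \<gamma> k \<in> measurable Pr (count_space UNIV)"
    and r_meas: "\<forall>k. r k \<in> measurable Pr (count_space UNIV)"
    and chan_law: "\<forall>m gs rs. measure Pr {\<omega> \<in> space Pr. (\<forall>k\<le>m. \<gamma> k \<omega> = gs k) \<and> (\<forall>k\<in>{1..m}. r k \<omega> = rs k)}
                      = chan_prob P0 P1 e D g0 m gs rs"
    and noise_chan_indep:
      "prob_space.indep_set Pr
         (sets (vimage_algebra (space Pr) (\<lambda>\<omega> k. v k \<omega>) (Pi\<^sub>M UNIV (\<lambda>_. borel))))
         (sets (vimage_algebra (space Pr) (\<lambda>\<omega> k. (\<gamma> k \<omega>, r k \<omega>)) (Pi\<^sub>M UNIV (\<lambda>_. count_space UNIV))))"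
  shows "integrable Pr (\<lambda>\<omega>. hperf a L c B x0 (\<lambda>k. v k \<omega>) (\<lambda>k. r k \<omega>) (next_rec (\<lambda>k. r k \<omega>)))
    \<and> prob_space.expectation Pr
        (\<lambda>\<omega>. hperf a L c B x0 (\<lambda>k. v k \<omega>) (\<lambda>k. r k \<omega>) (next_rec (\<lambda>k. r k \<omega>)))
      = gt P0 P1 e D ((a + L)\<^sup>2) g0 * x0\<^sup>2
        + M / (a\<^sup>2 - 1) * (gt P0 P1 e D (a\<^sup>2) g0 - gt P0 P1 e D 1 g0)
        - (B * ft P0 P1 e D (nu D B c x0) 1 g0
           + x0\<^sup>2 * (gt P0 P1 e D (c\<^sup>2) g0 - ft P0 P1 e D (nu D B c x0) (c\<^sup>2) g0))"
proof -
  interpret ctx Pr v \<gamma> r a L c M B x0 P0 P1 e D g0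
    by (intro ctx.intro) (rule assms)+
  show ?thesis by (rule main_ctx)
qed

end
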